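(* Let $\beta>0$ and $\alpha\in\mathbb{R}$ satisfy $|\alpha|<\beta$ and $|\alpha|+\beta=2$. For each even $N$ let $S=S_N\subset\{1,\dots,N\}$ with $|S|=N/2$, let $\sigma$ be distributed according to the block spin Ising Gibbs measure $\mu_{N,\alpha,\beta,S}$ described in the context, and let $m_1=\frac{2}{N}\sum_{i\in S}\sigma_i$, $m_2=\frac{2}{N}\sum_{i\notin S}\sigma_i$. Let $\rho$ be the probability measure on $\mathbb{R}$ with Lebesgue density $g(x)=\exp(-\tfrac{1}{12}x^4)/K$, where $K=\int_{\mathbb{R}}\exp(-\tfrac1{12}x^4)\,dx$. Then, as $N\to\infty$: \begin{enumerate} \item[(a)] If $\alpha>0$, then $\frac{\sqrt N}{2}(m_1-m_2)$ converges in distribution to a Gaussian with mean $0$ and variance $\frac{2}{2-(\beta-\alpha)}$. If $\alpha<0$, then $\frac{N^{1/4}}{2}(m_1-m_2)$ converges in distribution to $\rho$. \item[(b)] If $\alpha>0$, then $\frac{N^{1/4}}{2}(m_1+m_2)$ converges in distribution to $\rho$. If $\alpha<0$, then $\frac{\sqrt N}{2}(m_1+m_2)$ converges in distribution to a Gaussian with mean $0$ and variance $-\frac{1}{\alpha}$. \end{enumerate}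
   Context: Block spin Ising model: let $N$ be even and $S\subset\{1,\dots,N\}$ with $|S|=N/2$. For $i,j\in\{1,\dots,N\}$ write $i\sim j$ if $i,j\in S$ or $i,j\in S^c$, and $i\not\sim j$ otherwise. For parameters $\beta>0$, $|\alpha|\le\beta$, the Hamiltonian on $\{-1,+1\}^N$ is $$H_{N,\alpha,\beta,S}(\sigma)=-\frac{\beta}{2N}\sum_{i\sim j}\sigma_i\sigma_j-\frac{\alpha}{2N}\sum_{i\not\sim j}\sigma_i\sigma_j,$$ where the sums run over ordered pairs $(i,j)$, and the Gibbs measure is $\mu_{N,\alpha,\beta,S}(\sigma)=e^{-H_{N,\alpha,\beta,S}(\sigma)}/\sum_{\sigma'}e^{-H_{N,\alpha,\beta,S}(\sigma')}$. *)

theory Defs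
  imports "HOL-Probability.Probability"
begin

definition spin_configs :: "nat \<Rightarrow> (nat \<Rightarrow> real) set" where
  "spin_configs N = PiE {1..N} (\<lambda>_. {-1, 1})"

definition same_block :: "nat set \<Rightarrow> nat \<Rightarrow> nat \<Rightarrow> bool" where
  "same_block S i j \<longleftrightarrow> (i \<in> S \<longleftrightarrow> j \<in> S)"

definition block_hamiltonian ::
  "nat \<Rightarrow> real \<Rightarrow> real \<Rightarrow> nat set \<Rightarrow> (nat \<Rightarrow> real) \<Rightarrow> real" where
  "block_hamiltonian N \<alpha> \<beta> S \<sigma> =
     - (\<beta> / (2 * real N)) *
         (\<Sum>(i,j) \<in> {(i,j). i \<in> {1..N} \<and> j \<in> {1..N} \<and> same_block S i j}. \<sigma> i * \<sigma> j)
     - (\<alpha> / (2 * real N)) *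
         (\<Sum>(i,j) \<in> {(i,j). i \<in> {1..N} \<and> j \<in> {1..N} \<and> \<not> same_block S i j}. \<sigma> i * \<sigma> j)"

definition partition_fn :: "nat \<Rightarrow> real \<Rightarrow> real \<Rightarrow> nat set \<Rightarrow> real" where
  "partition_fn N \<alpha> \<beta> S = (\<Sum>\<sigma> \<in> spin_configs N. exp (- block_hamiltonian N \<alpha> \<beta> S \<sigma>))"

definition gibbs_pmf :: "nat \<Rightarrow> real \<Rightarrow> real \<Rightarrow> nat set \<Rightarrow> (nat \<Rightarrow> real) pmf" where
  "gibbs_pmf N \<alpha> \<beta> S = embed_pmf (\<lambda>\<sigma>. if \<sigma> \<in> spin_configs N
       then exp (- block_hamiltonian N \<alpha> \<beta> S \<sigma>) / partition_fn N \<alpha> \<beta> S else 0)"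

definition mag1 :: "nat \<Rightarrow> nat set \<Rightarrow> (nat \<Rightarrow> real) \<Rightarrow> real" where
  "mag1 N S \<sigma> = 2 / real N * (\<Sum>i \<in> S. \<sigma> i)"

definition mag2 :: "nat \<Rightarrow> nat set \<Rightarrow> (nat \<Rightarrow> real) \<Rightarrow> real" where
  "mag2 N S \<sigma> = 2 / real N * (\<Sum>i \<in> {1..N} - S. \<sigma> i)"

definition gibbs_law ::
  "nat \<Rightarrow> real \<Rightarrow> real \<Rightarrow> nat set \<Rightarrow> ((nat \<Rightarrow> real) \<Rightarrow> real) \<Rightarrow> real measure" where
  "gibbs_law N \<alpha> \<beta> S T = measure_pmf (map_pmf T (gibbs_pmf N \<alpha> \<beta> S))"

definition gaussian :: "real \<Rightarrow> real measure" where
  "gaussian v = density lborel (\<lambda>x. ennreal (normal_density 0 (sqrt v) x))"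

definition rho :: "real measure" where
  "rho = density lborel (\<lambda>x. ennreal (exp (- (x ^ 4) / 12) /
            (\<integral>y. exp (- (y ^ 4) / 12) \<partial>lborel)))"

end

theory Submission
  imports Defs "HOL-Real_Asymp.Real_Asymp"
begin

definition psi :: "real \<Rightarrow> real" where
  "psi x = x^2/2 - ln (cosh x)"

lemma psi_minus[simp]: "psi (-x) = psi x"
  by (simp add: psi_def)

lemma psi_0[simp]: "psi 0 = 0"
  by (simp add: psi_def)

lemma DERIV_psi: "DERIV psi x :> (x - tanh x)"
  unfolding psi_def
  by (auto intro!: derivative_eq_intros simp: tanh_def)

lemma DERIV_psi': fixes x :: real shows "DERIV (\<lambda>x. x - tanh x) x :> (tanh x)^2"
  by (auto intro!: derivative_eq_intros)

lemma convex_psi: "convex_on UNIV psi"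
  by (rule f''_ge0_imp_convex[OF _ DERIV_psi DERIV_psi']) auto

lemma psi_pair: "2 * psi a \<le> psi (a + d) + psi (a - d)"
proof -
  have "psi ((1 - 1/2) *\<^sub>R (a+d) + (1/2) *\<^sub>R (a-d)) \<le> (1 - 1/2) * psi (a+d) + (1/2) * psi (a-d)"
    by (rule convex_onD[OF convex_psi]) auto
  moreover have "(1 - 1/2) *\<^sub>R (a+d) + (1/2) *\<^sub>R (a-d) = a" by (simp add: field_simps)
  ultimately show ?thesis by simp
qed

lemma x_minus_tanh_nonneg: fixes x :: real assumes "0 \<le> x" shows "0 \<le> x - tanh x"
proof -
  have "0 - tanh 0 \<le> x - tanh x"
  proof (rule DERIV_nonneg_imp_nondecreasing[OF assms])
    fix z :: real
    show "\<exists>y. DERIV (\<lambda>x. x - tanh x) z :> y \<and> 0 \<le> y"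
      by (intro exI[of _ "(tanh z)^2"]) (simp add: DERIV_psi')
  qed
  then show ?thesis by simp
qed

lemma psi_mono: assumes "0 \<le> x" "x \<le> y" shows "psi x \<le> psi y"
proof (rule DERIV_nonneg_imp_nondecreasing[OF assms(2)])
  fix z assume "x \<le> z" "z \<le> y"
  then have "0 \<le> z - tanh z" using assms x_minus_tanh_nonneg by auto
  then show "\<exists>d. DERIV psi z :> d \<and> 0 \<le> d" using DERIV_psi by blast
qed

lemma psi_nonneg: "0 \<le> psi x"
proof -
  have "psi 0 \<le> psi \<bar>x\<bar>" by (rule psi_mono) auto
  moreover have "psi \<bar>x\<bar> = psi x" by (cases "x \<ge> 0") auto
  ultimately show ?thesis by simp
qed

lemma tanh_ge_half: fixes x :: real assumes "0 \<le> x" "x \<le> 1" shows "x/2 \<le> tanh x"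
proof -
  have e: "1 + 2*x + (2*x)^2/2 \<le> exp (2*x)"
    using exp_lower_Taylor_quadratic[of "2*x"] assms by simp
  have "(1 + 2*x + (2*x)^2/2) * (2 - x) = 2 + x + 2*x + 2*x^2*(1-x)"
    by (simp add: algebra_simps power2_eq_square power3_eq_cube)
  moreover have "0 \<le> 2*x^2*(1-x)" using assms by simp
  ultimately have "2 + x \<le> (1 + 2*x + (2*x)^2/2) * (2 - x)" using assms by linarith
  also have "\<dots> \<le> exp (2*x) * (2 - x)"
    using e assms by (intro mult_right_mono) auto
  finally have *: "2 + x \<le> exp (2*x) * (2 - x)" .
  define E where "E = exp (2*x)"
  have E: "0 < E" by (simp add: E_def)
  have m: "exp (- 2 * x) = inverse E"
  proof -
    have "exp (- (2 * x)) = inverse (exp (2*x))" by (rule exp_minus)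
    then show ?thesis unfolding E_def by simp
  qed
  have "tanh x = (1 - exp (- 2 * x))/(1 + exp (- 2 * x))" by (rule tanh_real_altdef)
  then have "tanh x = (1 - inverse E)/(1 + inverse E)" unfolding m .
  also have "\<dots> = (E - 1)/(E + 1)"
  proof -
    have "0 < E + E*E" using E by (simp add: add_pos_pos)
    then show ?thesis using E by (simp add: field_split_simps)
  qed
  finally have t: "tanh x = (E - 1)/(E + 1)" .
  have "x/2*(E+1) \<le> E - 1" using * unfolding E_def[symmetric] by (simp add: algebra_simps) argo
  moreover have "(E-1)/(E+1) - x/2 = ((E-1) - x/2*(E+1))/(E+1)" using E by (simp add: field_simps)
  moreover have "0 \<le> ((E-1) - x/2*(E+1))/(E+1)"
    using \<open>x/2*(E+1) \<le> E - 1\<close> E by (intro divide_nonneg_pos) auto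
  ultimately have "0 \<le> (E-1)/(E+1) - x/2" by argo
  then have "x/2 \<le> (E - 1)/(E + 1)" by simp
  then show ?thesis using t by simp
qed

lemma psi_quartic: assumes "0 \<le> x" "x \<le> 1" shows "x^4/48 \<le> psi x"
proof -
  define g' where "g' y = y - tanh y - y^3/12" for y :: real
  have D2: "DERIV g' y :> (tanh y)^2 - y^2/4" for y
    unfolding g'_def by (auto intro!: derivative_eq_intros simp: algebra_simps)
  have g'nn: "0 \<le> g' y" if "0 \<le> y" "y \<le> 1" for y
  proof -
    have "g' 0 \<le> g' y"
    proof (rule DERIV_nonneg_imp_nondecreasing[OF that(1)])
      fix z assume z: "0 \<le> z" "z \<le> y"
      have "z/2 \<le> tanh z" using tanh_ge_half z that by auto
      then have "(z/2)^2 \<le> (tanh z)^2" using z by (intro power_mono) auto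
      then have "0 \<le> (tanh z)^2 - z^2/4" by (simp add: power_divide)
      then show "\<exists>d. DERIV g' z :> d \<and> 0 \<le> d"
        using D2 by blast
    qed
    then show ?thesis by (simp add: g'_def)
  qed
  have "psi 0 - 0^4/48 \<le> psi x - x^4/48"
  proof (rule DERIV_nonneg_imp_nondecreasing[OF assms(1)])
    fix z assume z: "0 \<le> z" "z \<le> x"
    have "DERIV (\<lambda>y. psi y - y^4/48) z :> (z - tanh z) - z^3/12"
      by (auto intro!: derivative_eq_intros DERIV_psi)
    then show "\<exists>d. DERIV (\<lambda>y. psi y - y^4/48) z :> d \<and> 0 \<le> d"
      using g'nn[of z] z assms by (auto simp: g'_def)
  qed
  then show ?thesis by simp
qed

lemma ln_cosh_le_abs: fixes x :: real shows "ln (cosh x) \<le> \<bar>x\<bar>"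
proof -
  have "cosh x \<le> exp \<bar>x\<bar>"
  proof -
    have c: "cosh x = (exp x + exp (-x))/2" by (rule cosh_field_def)
    show ?thesis
    proof (cases "x \<ge> 0")
      case True
      then have "exp (-x) \<le> exp x" by simp
      then have "cosh x \<le> exp x" using c by argo
      then show ?thesis using True by simp
    next
      case False
      then have "exp x \<le> exp (-x)" by simp
      then have "cosh x \<le> exp (-x)" using c by argo
      then show ?thesis using False by simp
    qed
  qed
  then show ?thesis
    by (metis cosh_real_pos ln_exp ln_le_cancel_iff exp_gt_zero)
qed

lemma psi_lower: "min (x^4) (x^2) / 768 \<le> psi x"
proof -
  have ev: "psi x = psi \<bar>x\<bar>" by (cases "x \<ge> 0") auto
  define y where "y = \<bar>x\<bar>"
  have y: "0 \<le> y" "x^4 = y^4" "x^2 = y^2" by (auto simp: y_def power2_abs power_even_abs)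
  have "min (y^4) (y^2) / 768 \<le> psi y"
  proof (cases "y \<le> 1")
    case True
    have "min (y^4) (y^2) \<le> y^4" by simp
    moreover have "y^4/48 \<le> psi y" using psi_quartic[of y] y True by simp
    moreover have "0 \<le> y^4" using y by simp
    ultimately show ?thesis by linarith
  next
    case False
    show ?thesis
    proof (cases "y \<le> 4")
      case True
      have "1/48 \<le> psi 1" using psi_quartic[of 1] by simp
      also have "psi 1 \<le> psi y" using False by (intro psi_mono) auto
      finally have "1/48 \<le> psi y" .
      moreover have "y^2 \<le> 16"
      proof -
        have "y^2 \<le> 4^2" using True y by (intro power_mono) auto
        then show ?thesis by simp
      qed
      moreover have "min (y^4) (y^2) \<le> y^2" by simp
      ultimately show ?thesis by linarith
    next
      case False
      have "psi y \<ge> y^2/2 - y" using ln_cosh_le_abs[of y] y by (simp add: psi_def)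
      moreover have "y^2/2 - y \<ge> y^2/768"
      proof -
        have "y * 4 \<le> y * y" using False y by (intro mult_left_mono) auto
        then have "383*(y*4) \<le> 383*(y*y)" by simp
        then show ?thesis using y by (simp add: power2_eq_square)
      qed
      moreover have "min (y^4) (y^2) \<le> y^2" by simp
      ultimately show ?thesis by linarith
    qed
  qed
  moreover have "psi y = psi x" unfolding y_def using ev by simp
  ultimately show ?thesis unfolding y(2) y(3) by simp
qed

lemma psi_lim: "((\<lambda>x. psi x / x^4) \<longlongrightarrow> 1/12) (at 0)"
  unfolding psi_def by (real_asymp simp: cosh_def)

definition qq :: "nat \<Rightarrow> real" where "qq n = real (2*n) powr (1/4)"

lemma qq_pos: "n \<ge> 1 \<Longrightarrow> 0 < qq n"
  by (simp add: qq_def)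

lemma qq_pow4: "n \<ge> 1 \<Longrightarrow> qq n ^ 4 = 2 * real n"
proof -
  assume n: "n \<ge> 1"
  have "qq n ^ 4 = real (2*n) powr (real 4 * (1/4))"
    unfolding qq_def using n by (subst powr_power) auto
  also have "\<dots> = 2 * real n" using n by simp
  finally show ?thesis .
qed

lemma qq_sq: "n \<ge> 1 \<Longrightarrow> qq n ^ 2 = sqrt (real (2*n))"
proof -
  assume n: "n \<ge> 1"
  have "qq n ^ 2 = real (2*n) powr (real 2 * (1/4))"
    unfolding qq_def using n by (subst powr_power) auto
  also have "\<dots> = real (2*n) powr (1/2)" by simp
  also have "\<dots> = sqrt (real (2*n))" by (rule powr_half_sqrt) simp
  finally show ?thesis .
qed

lemma qq_ge1: "n \<ge> 1 \<Longrightarrow> 1 \<le> qq n"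
  unfolding qq_def by (rule ge_one_powr_ge_zero) auto

lemma qq_at_top: "filterlim qq at_top sequentially"
  unfolding qq_def by real_asymp

lemma n_qq: "n \<ge> 1 \<Longrightarrow> real n = qq n ^ 4 / 2"
  using qq_pow4 by simp

definition fN :: "real \<Rightarrow> nat \<Rightarrow> real \<Rightarrow> real \<Rightarrow> real" where
  "fN \<kappa> n s v = exp (- (s^2 * qq n ^ 2)/2 - \<kappa> * v^2/2) *
     (cosh (s / qq n + \<kappa> * v / qq n ^ 2) * cosh (s / qq n - \<kappa> * v / qq n ^ 2)) ^ n"

definition finf :: "real \<Rightarrow> real \<Rightarrow> real \<Rightarrow> real" where
  "finf \<kappa> s v = exp (- (s^4)/12 - \<kappa> * (1 - \<kappa>)/2 * v^2)"

lemma cosh_psi: "cosh y = exp (y^2/2 - psi y)"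
  by (simp add: psi_def)

lemma fN_psi:
  assumes n: "n \<ge> 1"
  shows "fN \<kappa> n s v = exp (- \<kappa> * (1 - \<kappa>)/2 * v^2
          - real n * (psi (s / qq n + \<kappa> * v / qq n ^ 2) + psi (s / qq n - \<kappa> * v / qq n ^ 2)))"
proof -
  define q where "q = qq n"
  have q: "0 < q" "real n = q^4/2" using qq_pos[OF n] n_qq[OF n] by (auto simp: q_def)
  define a where "a = s / q + \<kappa> * v / q^2"
  define b where "b = s / q - \<kappa> * v / q^2"
  have "(cosh a * cosh b) ^ n = exp (real n * ((a^2/2 - psi a) + (b^2/2 - psi b)))"
    unfolding cosh_psi by (simp add: exp_add[symmetric] exp_of_nat_mult[symmetric])
  then have "fN \<kappa> n s v = exp (- (s^2 * q ^ 2)/2 - \<kappa> * v^2/2 + real n * ((a^2/2 - psi a) + (b^2/2 - psi b)))"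
    unfolding fN_def q_def[symmetric] a_def[symmetric] b_def[symmetric] by (simp add: exp_add)
  also have "- (s^2 * q ^ 2)/2 - \<kappa> * v^2/2 + real n * ((a^2/2 - psi a) + (b^2/2 - psi b))
      = - \<kappa> * (1 - \<kappa>)/2 * v^2 - real n * (psi a + psi b)"
  proof -
    have "real n * (a^2/2 + b^2/2) = (s^2 * q ^ 2)/2 + \<kappa>^2 * v^2/2"
      unfolding a_def b_def q(2) using q(1) by (simp add: field_simps power2_eq_square power4_eq_xxxx)
    then show ?thesis by (simp add: algebra_simps power2_eq_square)
  qed
  finally show ?thesis by (simp add: a_def b_def q_def)
qed

lemma fN_nonneg: "0 \<le> fN \<kappa> n s v"
  unfolding fN_def by (intro mult_nonneg_nonneg zero_le_power) auto

lemma fN_bound: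
  assumes n: "n \<ge> 1"
  shows "fN \<kappa> n s v \<le> exp (1/768) * exp (- (s^2)/768) * exp (- \<kappa> * (1 - \<kappa>)/2 * v^2)"
proof -
  define q where "q = qq n"
  have q: "0 < q" "real n = q^4/2" "1 \<le> q" using qq_pos[OF n] n_qq[OF n] qq_ge1[OF n] by (auto simp: q_def)
  define a where "a = s / q"
  define d where "d = \<kappa> * v / q^2"
  have "2 * psi a \<le> psi (a + d) + psi (a - d)" by (rule psi_pair)
  moreover have "min (a^4) (a^2) / 768 \<le> psi a" by (rule psi_lower)
  ultimately have A: "real n * (2 * (min (a^4) (a^2) / 768)) \<le> real n * (psi (a + d) + psi (a - d))"
    by (intro mult_left_mono) auto
  have B: "s^2 - 1 \<le> real n * (2 * min (a^4) (a^2))"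
  proof (cases "a^4 \<le> a^2")
    case True
    then have "real n * (2 * min (a^4) (a^2)) = s^4"
      unfolding a_def q(2) using q(1) by (simp add: field_simps power4_eq_xxxx)
    moreover have "s^2 - 1 \<le> s^4"
    proof (cases "s^2 \<le> 1")
      case True
      have "0 \<le> s^4" by simp
      then show ?thesis using True by argo
    next
      case False
      then have "s^2 * 1 \<le> s^2 * s^2" by (intro mult_left_mono) auto
      then show ?thesis by (simp add: power4_eq_xxxx power2_eq_square)
    qed
    ultimately show ?thesis by simp
  next
    case False
    then have "real n * (2 * min (a^4) (a^2)) = s^2 * q^2"
      unfolding a_def q(2) using q(1) by (simp add: field_simps power2_eq_square power4_eq_xxxx)
    moreover have "s^2 * 1 \<le> s^2 * q^2" using q by (intro mult_left_mono) (auto simp: one_le_power)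
    ultimately show ?thesis by simp
  qed
  have "fN \<kappa> n s v = exp (- \<kappa> * (1 - \<kappa>)/2 * v^2 - real n * (psi (a + d) + psi (a - d)))"
    unfolding fN_psi[OF n] a_def d_def q_def by simp
  also have "\<dots> \<le> exp (1/768 + (- (s^2)/768) + (- \<kappa> * (1 - \<kappa>)/2 * v^2))"
    using A B by (intro exp_mono) (simp add: field_simps)
  also have "\<dots> = exp (1/768) * exp (- (s^2)/768) * exp (- \<kappa> * (1 - \<kappa>)/2 * v^2)"
    by (simp only: exp_add)
  finally show ?thesis .
qed

definition GG :: "real \<Rightarrow> real" where "GG y = (if y = 0 then 1/12 else psi y / y^4)"

lemma isCont_GG: "isCont GG 0"
proof -
  have "(GG \<longlongrightarrow> 1/12) (at 0)"
    using psi_lim by (rule Lim_transform_eventually)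
       (auto simp: GG_def eventually_at_filter)
  then show ?thesis unfolding isCont_def by (simp add: GG_def)
qed

lemma psi_GG: "psi y = y^4 * GG y"
  by (simp add: GG_def)

lemma npsi_lim: "(\<lambda>n. real n * psi (s / qq n + e / qq n ^ 2)) \<longlonglongrightarrow> s^4/24"
proof -
  have iq: "(\<lambda>n. inverse (qq n)) \<longlonglongrightarrow> 0"
    using qq_at_top by (rule tendsto_inverse_0_at_top)
  define x where "x n = s / qq n + e / qq n ^ 2" for n
  have x0: "x \<longlonglongrightarrow> 0"
  proof -
    have "(\<lambda>n. s * inverse (qq n) + e * (inverse (qq n))^2) \<longlonglongrightarrow> s * 0 + e * 0^2"
      by (intro tendsto_intros iq)
    then show ?thesis unfolding x_def by (simp add: divide_inverse power_inverse)
  qed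
  have G: "(\<lambda>n. GG (x n)) \<longlonglongrightarrow> 1/12"
    using isCont_tendsto_compose[OF isCont_GG x0] by (simp add: GG_def)
  have qx: "(\<lambda>n. s + e * inverse (qq n)) \<longlonglongrightarrow> s + e * 0"
    by (intro tendsto_intros iq)
  have P: "(\<lambda>n. (s + e * inverse (qq n))^4 / 2) \<longlonglongrightarrow> s^4/2"
    using qx by (auto intro!: tendsto_intros)
  have "(\<lambda>n. (s + e * inverse (qq n))^4 / 2 * GG (x n)) \<longlonglongrightarrow> s^4/2 * (1/12)"
    by (intro tendsto_mult P G)
  moreover have "eventually (\<lambda>n. (s + e * inverse (qq n))^4 / 2 * GG (x n) = real n * psi (x n)) sequentially"
  proof (rule eventually_sequentiallyI[of 1])
    fix n :: nat assume n: "n \<ge> 1"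
    have q: "0 < qq n" "real n = qq n^4/2" using qq_pos[OF n] n_qq[OF n] by auto
    have "s + e * inverse (qq n) = qq n * x n" using q(1) by (simp add: x_def field_simps power2_eq_square)
    then show "(s + e * inverse (qq n))^4 / 2 * GG (x n) = real n * psi (x n)"
      unfolding psi_GG q(2) by (simp add: power_mult_distrib)
  qed
  ultimately have "(\<lambda>n. real n * psi (x n)) \<longlonglongrightarrow> s^4/2 * (1/12)"
    by (rule Lim_transform_eventually)
  then show ?thesis by (simp add: x_def)
qed

lemma fN_lim: "(\<lambda>n. fN \<kappa> n s v) \<longlonglongrightarrow> finf \<kappa> s v"
proof -
  have "(\<lambda>n. exp (- \<kappa> * (1 - \<kappa>)/2 * v^2
          - (real n * psi (s / qq n + (\<kappa> * v) / qq n ^ 2) + real n * psi (s / qq n + (- \<kappa> * v) / qq n ^ 2))))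
        \<longlonglongrightarrow> exp (- \<kappa> * (1 - \<kappa>)/2 * v^2 - (s^4/24 + s^4/24))"
    by (intro tendsto_intros npsi_lim)
  moreover have "eventually (\<lambda>n. exp (- \<kappa> * (1 - \<kappa>)/2 * v^2
          - (real n * psi (s / qq n + (\<kappa> * v) / qq n ^ 2) + real n * psi (s / qq n + (- \<kappa> * v) / qq n ^ 2)))
          = fN \<kappa> n s v) sequentially"
  proof (rule eventually_sequentiallyI[of 1])
    fix n :: nat assume n: "n \<ge> 1"
    have e: "s / qq n + (- \<kappa> * v) / qq n ^ 2 = s / qq n - \<kappa> * v / qq n ^ 2" by simp
    show "exp (- \<kappa> * (1 - \<kappa>)/2 * v^2
          - (real n * psi (s / qq n + (\<kappa> * v) / qq n ^ 2) + real n * psi (s / qq n + (- \<kappa> * v) / qq n ^ 2)))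
          = fN \<kappa> n s v"
      unfolding fN_psi[OF n] e by (simp add: distrib_left)
  qed
  ultimately have "(\<lambda>n. fN \<kappa> n s v) \<longlonglongrightarrow> exp (- \<kappa> * (1 - \<kappa>)/2 * v^2 - (s^4/24 + s^4/24))"
    by (rule Lim_transform_eventually)
  moreover have "exp (- \<kappa> * (1 - \<kappa>)/2 * v^2 - (s^4/24 + s^4/24)) = finf \<kappa> s v"
    unfolding finf_def by (simp add: algebra_simps) argo
  ultimately show ?thesis by simp
qed

lemma dct_iter:
  fixes F :: "nat \<Rightarrow> real \<Rightarrow> real \<Rightarrow> real" and G :: "real \<Rightarrow> real \<Rightarrow> real"
    and a b :: "real \<Rightarrow> complex" and Da Db :: "real \<Rightarrow> real"
  assumes Fm[measurable]: "\<And>n. (\<lambda>(s,v). F n s v) \<in> borel_measurable (lborel \<Otimes>\<^sub>M lborel)"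
    and Gm[measurable]: "(\<lambda>(s,v). G s v) \<in> borel_measurable (lborel \<Otimes>\<^sub>M lborel)"
    and am[measurable]: "a \<in> borel_measurable lborel" and bm[measurable]: "b \<in> borel_measurable lborel"
    and an: "\<And>s. norm (a s) \<le> 1" and bn: "\<And>v. norm (b v) \<le> 1"
    and Dai: "integrable lborel Da" and Dbi: "integrable lborel Db"
    and Dan: "\<And>s. 0 \<le> Da s" and Dbn: "\<And>v. 0 \<le> Db v"
    and bound: "\<And>n s v. \<bar>F n s v\<bar> \<le> Da s * Db v"
    and lim: "\<And>s v. (\<lambda>n. F n s v) \<longlonglongrightarrow> G s v"
  shows "(\<lambda>n. \<integral>s. (\<integral>v. a s * b v * complex_of_real (F n s v) \<partial>lborel) \<partial>lborel)
           \<longlonglongrightarrow> (\<integral>s. (\<integral>v. a s * b v * complex_of_real (G s v) \<partial>lborel) \<partial>lborel)"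
proof -
  have Dam[measurable]: "Da \<in> borel_measurable lborel" using Dai by (rule borel_measurable_integrable)
  have Dbm[measurable]: "Db \<in> borel_measurable lborel" using Dbi by (rule borel_measurable_integrable)
  have Fm1[measurable]: "(\<lambda>v. F n s v) \<in> borel_measurable lborel" for n s
    using measurable_Pair2[OF Fm[of n], of s] by simp
  have Gm1[measurable]: "(\<lambda>v. G s v) \<in> borel_measurable lborel" for s
    using measurable_Pair2[OF Gm, of s] by simp
  have inner_bound: "norm (a s * b v * complex_of_real (F n s v)) \<le> Da s * Db v" for n s v
  proof -
    have "norm (a s * b v * complex_of_real (F n s v)) = norm (a s) * norm (b v) * \<bar>F n s v\<bar>"
      by (simp add: norm_mult)
    also have "\<dots> \<le> 1 * 1 * \<bar>F n s v\<bar>"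
      using an[of s] bn[of v] by (intro mult_right_mono mult_mono) auto
    also have "\<dots> \<le> Da s * Db v" using bound[of n s v] by simp
    finally show ?thesis .
  qed
  have Gbound: "\<bar>G s v\<bar> \<le> Da s * Db v" for s v
  proof (rule LIMSEQ_le_const2)
    show "(\<lambda>n. \<bar>F n s v\<bar>) \<longlonglongrightarrow> \<bar>G s v\<bar>" using lim[of s v] by (rule tendsto_rabs)
  qed (use bound in auto)
  have inner_boundG: "norm (a s * b v * complex_of_real (G s v)) \<le> Da s * Db v" for s v
  proof -
    have "norm (a s * b v * complex_of_real (G s v)) = norm (a s) * norm (b v) * \<bar>G s v\<bar>"
      by (simp add: norm_mult)
    also have "\<dots> \<le> 1 * 1 * \<bar>G s v\<bar>"
      using an[of s] bn[of v] by (intro mult_right_mono mult_mono) auto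
    also have "\<dots> \<le> Da s * Db v" using Gbound[of s v] by simp
    finally show ?thesis .
  qed
  have inner_lim: "(\<lambda>n. \<integral>v. a s * b v * complex_of_real (F n s v) \<partial>lborel)
           \<longlonglongrightarrow> (\<integral>v. a s * b v * complex_of_real (G s v) \<partial>lborel)" for s
  proof (rule integral_dominated_convergence[where w="\<lambda>v. Da s * Db v"])
    show "integrable lborel (\<lambda>v. Da s * Db v)" using Dbi by simp
    show "AE v in lborel. (\<lambda>n. a s * b v * complex_of_real (F n s v)) \<longlonglongrightarrow> a s * b v * complex_of_real (G s v)"
      using lim by (auto intro!: tendsto_intros)
    show "\<And>n. AE v in lborel. norm (a s * b v * complex_of_real (F n s v)) \<le> Da s * Db v"
      using inner_bound by auto
  qed measurable
  have outer_bound: "norm (\<integral>v. a s * b v * complex_of_real (F n s v) \<partial>lborel) \<le> Da s * (\<integral>v. Db v \<partial>lborel)" for n s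
  proof -
    have "norm (\<integral>v. a s * b v * complex_of_real (F n s v) \<partial>lborel) \<le> (\<integral>v. norm (a s * b v * complex_of_real (F n s v)) \<partial>lborel)"
      by (rule integral_norm_bound)
    also have "\<dots> \<le> (\<integral>v. Da s * Db v \<partial>lborel)"
    proof (rule integral_mono)
      have m: "(\<lambda>v. a s * b v * complex_of_real (F n s v)) \<in> borel_measurable lborel" by measurable
      have "integrable lborel (\<lambda>v. a s * b v * complex_of_real (F n s v))"
      proof (rule Bochner_Integration.integrable_bound[OF _ m])
        show "integrable lborel (\<lambda>v. Da s * Db v)" using Dbi by simp
        show "AE v in lborel. norm (a s * b v * complex_of_real (F n s v)) \<le> norm (Da s * Db v)"
          using inner_bound Dan Dbn by (auto intro: order_trans)
      qed
      then show "integrable lborel (\<lambda>v. norm (a s * b v * complex_of_real (F n s v)))"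
        by (rule integrable_norm)
    qed (use Dbi inner_bound in auto)
    also have "\<dots> = Da s * (\<integral>v. Db v \<partial>lborel)" by simp
    finally show ?thesis .
  qed
  show ?thesis
  proof (rule integral_dominated_convergence[where w="\<lambda>s. Da s * (\<integral>v. Db v \<partial>lborel)"])
    show "integrable lborel (\<lambda>s. Da s * (\<integral>v. Db v \<partial>lborel))" using Dai by simp
    show "AE s in lborel. (\<lambda>n. \<integral>v. a s * b v * complex_of_real (F n s v) \<partial>lborel) \<longlonglongrightarrow>
        (\<integral>v. a s * b v * complex_of_real (G s v) \<partial>lborel)"
      using inner_lim by auto
    show "\<And>n. AE s in lborel. norm (\<integral>v. a s * b v * complex_of_real (F n s v) \<partial>lborel) \<le> Da s * (\<integral>v. Db v \<partial>lborel)"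
      using outer_bound by auto
  qed measurable
qed

lemma std_char: "(\<integral>x. std_normal_density x *\<^sub>R iexp (t * x) \<partial>lborel) = complex_of_real (exp (- (t^2) / 2))"
proof -
  have "char std_normal_distribution t = complex_of_real (exp (- (t^2) / 2))"
    by (simp add: char_std_normal_distribution)
  moreover have "char std_normal_distribution t = (\<integral>x. std_normal_density x *\<^sub>R iexp (t * x) \<partial>lborel)"
    unfolding char_def by (subst integral_density) (auto simp: normal_density_nonneg)
  ultimately show ?thesis by simp
qed

lemma nd_affine: "0 < \<sigma> \<Longrightarrow> normal_density m \<sigma> (m + \<sigma> * y) = std_normal_density y / \<sigma>"
  unfolding normal_density_def
  by (simp add: power_mult_distrib real_sqrt_mult field_simps)

lemma gauss_char:
  assumes "0 < \<sigma>"
  shows "(\<integral>x. normal_density m \<sigma> x *\<^sub>R iexp (t * x) \<partial>lborel)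
           = iexp (t * m) * complex_of_real (exp (- ((\<sigma> * t)^2) / 2))"
proof -
  have "(\<integral>x. normal_density m \<sigma> x *\<^sub>R iexp (t * x) \<partial>lborel)
        = \<bar>\<sigma>\<bar> *\<^sub>R (\<integral>y. normal_density m \<sigma> (m + \<sigma> * y) *\<^sub>R iexp (t * (m + \<sigma> * y)) \<partial>lborel)"
    using assms by (intro lborel_integral_real_affine) auto
  also have "(\<lambda>y. normal_density m \<sigma> (m + \<sigma> * y) *\<^sub>R iexp (t * (m + \<sigma> * y)))
       = (\<lambda>y. (iexp (t * m) / complex_of_real \<sigma>) * (std_normal_density y *\<^sub>R iexp ((\<sigma> * t) * y)))"
  proof
    fix y
    have nd: "normal_density m \<sigma> (m + \<sigma> * y) = std_normal_density y / \<sigma>" by (rule nd_affine[OF assms])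
    have e: "iexp (t * (m + \<sigma> * y)) = iexp (t * m) * iexp ((\<sigma> * t) * y)"
      by (simp add: distrib_left exp_add[symmetric] algebra_simps)
    show "normal_density m \<sigma> (m + \<sigma> * y) *\<^sub>R iexp (t * (m + \<sigma> * y))
       = (iexp (t * m) / complex_of_real \<sigma>) * (std_normal_density y *\<^sub>R iexp ((\<sigma> * t) * y))"
      unfolding nd e using assms by (simp add: scaleR_conv_of_real field_simps)
  qed
  also have "\<bar>\<sigma>\<bar> *\<^sub>R (\<integral>y. (iexp (t * m) / complex_of_real \<sigma>) * (std_normal_density y *\<^sub>R iexp ((\<sigma> * t) * y)) \<partial>lborel)
      = \<bar>\<sigma>\<bar> *\<^sub>R ((iexp (t * m) / complex_of_real \<sigma>) * complex_of_real (exp (- ((\<sigma> * t)^2) / 2)))"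
    by (simp only: integral_mult_right_zero std_char)
  also have "\<dots> = iexp (t * m) * complex_of_real (exp (- ((\<sigma> * t)^2) / 2))"
    using assms by (simp add: scaleR_conv_of_real)
  finally show ?thesis .
qed

lemma gauss_integrable:
  fixes b :: "real \<Rightarrow> complex"
  assumes "0 < \<sigma>" and bm[measurable]: "b \<in> borel_measurable lborel" and bn: "\<And>x. norm (b x) \<le> 1"
  shows "integrable lborel (\<lambda>x. normal_density m \<sigma> x *\<^sub>R b x)"
proof (rule Bochner_Integration.integrable_bound)
  show "integrable lborel (normal_density m \<sigma>)" using assms(1) by simp
  show "(\<lambda>x. normal_density m \<sigma> x *\<^sub>R b x) \<in> borel_measurable lborel" by measurable
  show "AE x in lborel. norm (normal_density m \<sigma> x *\<^sub>R b x) \<le> norm (normal_density m \<sigma> x)"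
    using bn by (auto intro!: mult_left_le simp: normal_density_nonneg)
qed

lemma mix_integral:
  fixes a b :: "real \<Rightarrow> complex" and w m1 m2 :: "'a \<Rightarrow> real"
  assumes fin: "finite \<Omega>" and s1: "0 < \<sigma>1" and s2: "0 < \<sigma>2"
    and am[measurable]: "a \<in> borel_measurable lborel" and bm[measurable]: "b \<in> borel_measurable lborel"
    and an: "\<And>x. norm (a x) \<le> 1" and bn: "\<And>x. norm (b x) \<le> 1"
  shows "(\<integral>s. (\<integral>v. a s * b v * complex_of_real
            (\<Sum>\<sigma>\<in>\<Omega>. w \<sigma> * normal_density (m1 \<sigma>) \<sigma>1 s * normal_density (m2 \<sigma>) \<sigma>2 v) \<partial>lborel) \<partial>lborel)
         = (\<Sum>\<sigma>\<in>\<Omega>. complex_of_real (w \<sigma>) * (\<integral>s. normal_density (m1 \<sigma>) \<sigma>1 s *\<^sub>R a s \<partial>lborel)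
                              * (\<integral>v. normal_density (m2 \<sigma>) \<sigma>2 v *\<^sub>R b v \<partial>lborel))"
proof -
  define C where "C \<sigma> s = complex_of_real (w \<sigma>) * (normal_density (m1 \<sigma>) \<sigma>1 s *\<^sub>R a s)" for \<sigma> s
  define I2 where "I2 \<sigma> = (\<integral>v. normal_density (m2 \<sigma>) \<sigma>2 v *\<^sub>R b v \<partial>lborel)" for \<sigma>
  have inner: "(\<integral>v. a s * b v * complex_of_real
            (\<Sum>\<sigma>\<in>\<Omega>. w \<sigma> * normal_density (m1 \<sigma>) \<sigma>1 s * normal_density (m2 \<sigma>) \<sigma>2 v) \<partial>lborel)
       = (\<Sum>\<sigma>\<in>\<Omega>. C \<sigma> s * I2 \<sigma>)" for s
  proof -
    have "(\<lambda>v. a s * b v * complex_of_real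
            (\<Sum>\<sigma>\<in>\<Omega>. w \<sigma> * normal_density (m1 \<sigma>) \<sigma>1 s * normal_density (m2 \<sigma>) \<sigma>2 v))
        = (\<lambda>v. \<Sum>\<sigma>\<in>\<Omega>. C \<sigma> s * (normal_density (m2 \<sigma>) \<sigma>2 v *\<^sub>R b v))"
      by (auto simp: fun_eq_iff sum_distrib_left scaleR_conv_of_real mult_ac C_def)
    then have "(\<integral>v. a s * b v * complex_of_real
            (\<Sum>\<sigma>\<in>\<Omega>. w \<sigma> * normal_density (m1 \<sigma>) \<sigma>1 s * normal_density (m2 \<sigma>) \<sigma>2 v) \<partial>lborel)
        = (\<integral>v. (\<Sum>\<sigma>\<in>\<Omega>. C \<sigma> s * (normal_density (m2 \<sigma>) \<sigma>2 v *\<^sub>R b v)) \<partial>lborel)"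
      by simp
    also have "\<dots> = (\<Sum>\<sigma>\<in>\<Omega>. (\<integral>v. C \<sigma> s * (normal_density (m2 \<sigma>) \<sigma>2 v *\<^sub>R b v) \<partial>lborel))"
      by (rule Bochner_Integration.integral_sum) (rule integrable_mult_right[OF gauss_integrable[OF s2 bm bn]])
    also have "\<dots> = (\<Sum>\<sigma>\<in>\<Omega>. C \<sigma> s * I2 \<sigma>)"
      unfolding I2_def by (simp only: integral_mult_right_zero)
    finally show ?thesis .
  qed
  have "(\<integral>s. (\<integral>v. a s * b v * complex_of_real
            (\<Sum>\<sigma>\<in>\<Omega>. w \<sigma> * normal_density (m1 \<sigma>) \<sigma>1 s * normal_density (m2 \<sigma>) \<sigma>2 v) \<partial>lborel) \<partial>lborel)
      = (\<integral>s. (\<Sum>\<sigma>\<in>\<Omega>. C \<sigma> s * I2 \<sigma>) \<partial>lborel)"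
    by (rule Bochner_Integration.integral_cong[OF refl inner])
  also have "\<dots> = (\<Sum>\<sigma>\<in>\<Omega>. (\<integral>s. C \<sigma> s * I2 \<sigma> \<partial>lborel))"
    by (rule Bochner_Integration.integral_sum) (unfold C_def, rule integrable_mult_left[OF integrable_mult_right[OF gauss_integrable[OF s1 am an]]])
  also have "\<dots> = (\<Sum>\<sigma>\<in>\<Omega>. complex_of_real (w \<sigma>) * (\<integral>s. normal_density (m1 \<sigma>) \<sigma>1 s *\<^sub>R a s \<partial>lborel) * I2 \<sigma>)"
    unfolding C_def by (simp only: integral_mult_left_zero integral_mult_right_zero)
  finally show ?thesis unfolding I2_def .
qed

definition wt :: "real \<Rightarrow> nat \<Rightarrow> real \<Rightarrow> real \<Rightarrow> real" where
  "wt \<kappa> n p r = exp ((p^2 + \<kappa> * r^2) / (4 * real n))"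

definition c1 :: "nat \<Rightarrow> real" where "c1 n = 1 / sqrt (2 * pi * (1 / qq n)^2)"
definition c2 :: "real \<Rightarrow> real" where "c2 \<kappa> = 1 / sqrt (2 * pi * (1 / sqrt \<kappa>)^2)"

lemma c1_pos: "n \<ge> 1 \<Longrightarrow> 0 < c1 n"
  using qq_pos[of n] by (simp add: c1_def)

lemma c2_pos: "0 < \<kappa> \<Longrightarrow> 0 < c2 \<kappa>"
  by (simp add: c2_def)

lemma mix_point:
  assumes n: "n \<ge> 1" and k: "0 < \<kappa>"
  shows "wt \<kappa> n p r * normal_density (p / qq n ^ 3) (1 / qq n) s * normal_density (r / qq n ^ 2) (1 / sqrt \<kappa>) v
     = c1 n * c2 \<kappa> * exp (- (s^2 * qq n ^ 2)/2 - \<kappa> * v^2/2) * exp ((s / qq n) * p + (\<kappa> * v / qq n ^ 2) * r)"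
proof -
  define q where "q = qq n"
  have q: "0 < q" "real n = q^4/2" using qq_pos[OF n] n_qq[OF n] by (auto simp: q_def)
  have e1: "(1 / q)^2 = 1 / q^2" by (simp add: power_divide)
  have e2: "(1 / sqrt \<kappa>)^2 = 1 / \<kappa>" using k by (simp add: power_divide)
  have "wt \<kappa> n p r * normal_density (p / q ^ 3) (1 / q) s * normal_density (r / q ^ 2) (1 / sqrt \<kappa>) v
     = c1 n * c2 \<kappa> * exp ((p^2 + \<kappa> * r^2) / (4 * real n) + (- ((s - p / q^3)^2) / (2 * (1/q)^2))
                           + (- ((v - r / q^2)^2) / (2 * (1 / sqrt \<kappa>)^2)))"
    unfolding wt_def normal_density_def c1_def c2_def q_def[symmetric] exp_add by (simp add: mult_ac)
  also have "(p^2 + \<kappa> * r^2) / (4 * real n) + (- ((s - p / q^3)^2) / (2 * (1/q)^2))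
                           + (- ((v - r / q^2)^2) / (2 * (1 / sqrt \<kappa>)^2))
      = (- (s^2 * q ^ 2)/2 - \<kappa> * v^2/2) + ((s / q) * p + (\<kappa> * v / q ^ 2) * r)"
    unfolding e1 e2 q(2) using q(1) k
    by (simp add: field_simps power2_eq_square power3_eq_cube power4_eq_xxxx)
  finally show ?thesis unfolding q_def exp_add by (simp add: mult_ac)
qed

lemma mix_eq:
  assumes n: "n \<ge> 1" and k: "0 < \<kappa>"
    and mgf: "\<And>x y. (\<Sum>\<sigma>\<in>\<Omega>. exp (x * P \<sigma> + y * Q \<sigma>)) = K * (cosh (x + y) * cosh (x - y)) ^ n"
  shows "(\<Sum>\<sigma>\<in>\<Omega>. wt \<kappa> n (P \<sigma>) (Q \<sigma>) * normal_density (P \<sigma> / qq n ^ 3) (1 / qq n) s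
                     * normal_density (Q \<sigma> / qq n ^ 2) (1 / sqrt \<kappa>) v)
      = c1 n * c2 \<kappa> * K * fN \<kappa> n s v"
proof -
  have "(\<Sum>\<sigma>\<in>\<Omega>. wt \<kappa> n (P \<sigma>) (Q \<sigma>) * normal_density (P \<sigma> / qq n ^ 3) (1 / qq n) s
                     * normal_density (Q \<sigma> / qq n ^ 2) (1 / sqrt \<kappa>) v)
     = (\<Sum>\<sigma>\<in>\<Omega>. c1 n * c2 \<kappa> * exp (- (s^2 * qq n ^ 2)/2 - \<kappa> * v^2/2)
           * exp ((s / qq n) * P \<sigma> + (\<kappa> * v / qq n ^ 2) * Q \<sigma>))"
    by (simp only: mix_point[OF n k])
  also have "\<dots> = c1 n * c2 \<kappa> * exp (- (s^2 * qq n ^ 2)/2 - \<kappa> * v^2/2)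
           * (\<Sum>\<sigma>\<in>\<Omega>. exp ((s / qq n) * P \<sigma> + (\<kappa> * v / qq n ^ 2) * Q \<sigma>))"
    by (simp only: sum_distrib_left)
  also have "\<dots> = c1 n * c2 \<kappa> * K * fN \<kappa> n s v"
    unfolding mgf fN_def by (simp add: mult_ac)
  finally show ?thesis .
qed

lemma cosh_measurable[measurable]: "(cosh :: real \<Rightarrow> real) \<in> borel_measurable borel"
  by (intro borel_measurable_continuous_onI continuous_intros)

lemma fN_measurable[measurable]: "(\<lambda>(s,v). fN \<kappa> n s v) \<in> borel_measurable (lborel \<Otimes>\<^sub>M lborel)"
  unfolding fN_def by measurable

lemma finf_measurable[measurable]: "(\<lambda>(s,v). finf \<kappa> s v) \<in> borel_measurable (lborel \<Otimes>\<^sub>M lborel)"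
  unfolding finf_def by measurable

lemma iexp_measurable[measurable]: "(\<lambda>x. iexp (t * x)) \<in> borel_measurable lborel"
  by measurable

lemma gauss_fun: fixes c x :: real shows "0 < c \<Longrightarrow> exp (- c * x^2) = sqrt (pi / c) * normal_density 0 (1 / sqrt (2*c)) x"
  unfolding normal_density_def
  by (simp add: power_divide real_sqrt_divide real_sqrt_mult field_simps)

lemma gauss_fun_integrable: fixes c :: real shows "0 < c \<Longrightarrow> integrable lborel (\<lambda>x::real. exp (- c * x^2))"
  by (subst gauss_fun) auto

lemma gauss_one: "0 < \<sigma> \<Longrightarrow> (\<integral>x. normal_density m \<sigma> x *\<^sub>R (1::complex) \<partial>lborel) = 1"
  using gauss_char[of \<sigma> m 0] by simp

definition e1 :: "real \<Rightarrow> real" where "e1 s = exp (- (s^4)/12)"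

lemma e1_bound: "e1 s \<le> exp (1/12) * exp (- (1/12) * s^2)"
proof -
  have "s^2 - 1 \<le> s^4"
  proof (cases "s^2 \<le> 1")
    case True
    have "0 \<le> s^4" by simp
    then show ?thesis using True by argo
  next
    case False
    then have "s^2 * 1 \<le> s^2 * s^2" by (intro mult_left_mono) auto
    then show ?thesis by (simp add: power4_eq_xxxx power2_eq_square)
  qed
  then have "- (s^4)/12 \<le> 1/12 + (- (1/12) * s^2)" by simp
  then show ?thesis unfolding e1_def exp_add[symmetric] by simp
qed

lemma e1_integrable: "integrable lborel e1"
proof (rule Bochner_Integration.integrable_bound)
  show "integrable lborel (\<lambda>s::real. exp (1/12::real) * exp (- (1/12) * s^2))"
    using gauss_fun_integrable[of "1/12"] by (intro integrable_mult_right) simp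
  show "e1 \<in> borel_measurable lborel" unfolding e1_def by measurable
  show "AE x in lborel. norm (e1 x) \<le> norm (exp (1/12) * exp (- (1/12) * x^2))"
    using e1_bound by (simp add: e1_def)
qed

lemma e1_int_pos: "0 < (\<integral>s. e1 s \<partial>lborel)"
proof -
  have "0 \<le> (\<integral>s. e1 s \<partial>lborel)" by (simp add: e1_def)
  moreover have "(\<integral>s. e1 s \<partial>lborel) \<noteq> 0"
  proof
    assume "(\<integral>s. e1 s \<partial>lborel) = 0"
    moreover have nn: "AE s in lborel. 0 \<le> e1 s" by (simp add: e1_def)
    ultimately have "AE s in lborel. e1 s = 0"
      using integral_nonneg_eq_0_iff_AE[OF e1_integrable nn] by simp
    moreover have "\<And>s. (e1 s = 0) = False" by (simp add: e1_def)
    ultimately have "AE s in (lborel::real measure). False" by simp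
    then have "trivial_limit (ae_filter (lborel::real measure))" unfolding trivial_limit_def .
    then have "emeasure (lborel::real measure) (space lborel) = 0" using ae_filter_eq_bot_iff[of "lborel::real measure"] by simp
    then show False by simp
  qed
  ultimately show ?thesis by simp
qed

lemma finf_split: "finf \<kappa> s v = e1 s * exp (- (\<kappa> * (1 - \<kappa>)/2) * v^2)"
  unfolding finf_def e1_def by (simp add: exp_diff[symmetric] exp_add[symmetric] algebra_simps)

lemma finf_integral:
  fixes a b :: "real \<Rightarrow> complex"
  assumes k: "0 < \<kappa>" "\<kappa> < 1"
  shows "(\<integral>s. (\<integral>v. a s * b v * complex_of_real (finf \<kappa> s v) \<partial>lborel) \<partial>lborel)
    = (\<integral>s. e1 s *\<^sub>R a s \<partial>lborel) * (sqrt (pi / (\<kappa> * (1 - \<kappa>)/2)) *\<^sub>R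
          (\<integral>v. normal_density 0 (1 / sqrt (2 * (\<kappa> * (1 - \<kappa>)/2))) v *\<^sub>R b v \<partial>lborel))"
proof -
  define c where "c = \<kappa> * (1 - \<kappa>)/2"
  have c: "0 < c" using k by (simp add: c_def)
  define nd where "nd v = normal_density 0 (1 / sqrt (2 * c)) v" for v
  have "a s * b v * complex_of_real (finf \<kappa> s v)
      = (e1 s *\<^sub>R a s) * (sqrt (pi / c) *\<^sub>R (nd v *\<^sub>R b v))" for s v
    unfolding finf_split c_def[symmetric] gauss_fun[OF c] nd_def
    by (simp add: scaleR_conv_of_real mult_ac)
  then have "(\<integral>s. (\<integral>v. a s * b v * complex_of_real (finf \<kappa> s v) \<partial>lborel) \<partial>lborel)
      = (\<integral>s. (\<integral>v. (e1 s *\<^sub>R a s) * (sqrt (pi / c) *\<^sub>R (nd v *\<^sub>R b v)) \<partial>lborel) \<partial>lborel)"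
    by simp
  also have "\<dots> = (\<integral>s. (e1 s *\<^sub>R a s) * (\<integral>v. sqrt (pi / c) *\<^sub>R (nd v *\<^sub>R b v) \<partial>lborel) \<partial>lborel)"
    by (simp only: integral_mult_right_zero)
  also have "\<dots> = (\<integral>s. e1 s *\<^sub>R a s \<partial>lborel) * (\<integral>v. sqrt (pi / c) *\<^sub>R (nd v *\<^sub>R b v) \<partial>lborel)"
    by (simp only: integral_mult_left_zero)
  also have "(\<integral>v. sqrt (pi / c) *\<^sub>R (nd v *\<^sub>R b v) \<partial>lborel) = sqrt (pi / c) *\<^sub>R (\<integral>v. nd v *\<^sub>R b v \<partial>lborel)"
    by (rule integral_scaleR_right)
  finally show ?thesis unfolding c_def nd_def .
qed

lemma K_pos:
  fixes K :: real
  assumes fin: "finite \<Omega>" and ne: "\<Omega> \<noteq> {}"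
    and mgf: "\<And>x y. (\<Sum>\<sigma>\<in>\<Omega>. exp (x * P \<sigma> + y * Q \<sigma>)) = K * (cosh (x + y) * cosh (x - y)) ^ n"
  shows "0 < K"
proof -
  have "real (card \<Omega>) = K" using mgf[of 0 0] by simp
  moreover have "0 < card \<Omega>" using fin ne by (simp add: card_gt_0_iff)
  ultimately show ?thesis by simp
qed

lemma int_formula:
  fixes a b :: "real \<Rightarrow> complex"
  assumes n: "n \<ge> 1" and k: "0 < \<kappa>" and fin: "finite \<Omega>" and Kp: "0 < K"
    and mgf: "\<And>x y. (\<Sum>\<sigma>\<in>\<Omega>. exp (x * P \<sigma> + y * Q \<sigma>)) = K * (cosh (x + y) * cosh (x - y)) ^ n"
    and am[measurable]: "a \<in> borel_measurable lborel" and bm[measurable]: "b \<in> borel_measurable lborel"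
    and an: "\<And>x. norm (a x) \<le> 1" and bn: "\<And>x. norm (b x) \<le> 1"
  shows "(\<integral>s. (\<integral>v. a s * b v * complex_of_real (fN \<kappa> n s v) \<partial>lborel) \<partial>lborel)
     = complex_of_real (1 / (c1 n * c2 \<kappa> * K)) *
       (\<Sum>\<sigma>\<in>\<Omega>. complex_of_real (wt \<kappa> n (P \<sigma>) (Q \<sigma>))
              * (\<integral>s. normal_density (P \<sigma> / qq n ^ 3) (1 / qq n) s *\<^sub>R a s \<partial>lborel)
              * (\<integral>v. normal_density (Q \<sigma> / qq n ^ 2) (1 / sqrt \<kappa>) v *\<^sub>R b v \<partial>lborel))"
proof -
  define C where "C = c1 n * c2 \<kappa> * K"
  have C: "0 < C" unfolding C_def using c1_pos[OF n] c2_pos[OF k] Kp by simp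
  define mix where "mix s v = (\<Sum>\<sigma>\<in>\<Omega>. wt \<kappa> n (P \<sigma>) (Q \<sigma>) * normal_density (P \<sigma> / qq n ^ 3) (1 / qq n) s
                     * normal_density (Q \<sigma> / qq n ^ 2) (1 / sqrt \<kappa>) v)" for s v
  have f: "fN \<kappa> n s v = (1 / C) * mix s v" for s v
    unfolding mix_def mix_eq[OF n k mgf] C_def using c1_pos[OF n] c2_pos[OF k] Kp by simp
  have "(\<integral>s. (\<integral>v. a s * b v * complex_of_real (fN \<kappa> n s v) \<partial>lborel) \<partial>lborel)
      = (\<integral>s. (\<integral>v. complex_of_real (1 / C) * (a s * b v * complex_of_real (mix s v)) \<partial>lborel) \<partial>lborel)"
    unfolding f by (simp add: mult_ac)
  also have "\<dots> = complex_of_real (1 / C) * (\<integral>s. (\<integral>v. a s * b v * complex_of_real (mix s v) \<partial>lborel) \<partial>lborel)"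
    by (simp only: integral_mult_right_zero)
  also have "(\<integral>s. (\<integral>v. a s * b v * complex_of_real (mix s v) \<partial>lborel) \<partial>lborel)
     = (\<Sum>\<sigma>\<in>\<Omega>. complex_of_real (wt \<kappa> n (P \<sigma>) (Q \<sigma>))
              * (\<integral>s. normal_density (P \<sigma> / qq n ^ 3) (1 / qq n) s *\<^sub>R a s \<partial>lborel)
              * (\<integral>v. normal_density (Q \<sigma> / qq n ^ 2) (1 / sqrt \<kappa>) v *\<^sub>R b v \<partial>lborel))"
    unfolding mix_def
    by (rule mix_integral[OF fin _ _ am bm an bn]) (use qq_pos[OF n] k in auto)
  finally show ?thesis unfolding C_def .
qed

lemma D1_integrable: "integrable lborel (\<lambda>s::real. exp (1/768) * exp (- (s^2)/768))"
proof -
  have "integrable lborel (\<lambda>s::real. exp (1/768::real) * exp (- (1/768) * s^2))"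
    using gauss_fun_integrable[of "1/768"] by (intro integrable_mult_right) simp
  then show ?thesis by simp
qed

lemma D2_integrable: "0 < \<kappa> \<Longrightarrow> \<kappa> < 1 \<Longrightarrow> integrable lborel (\<lambda>v::real. exp (- \<kappa> * (1 - \<kappa>)/2 * v^2))"
proof -
  assume k: "0 < \<kappa>" "\<kappa> < 1"
  have "integrable lborel (\<lambda>v::real. exp (- (\<kappa> * (1 - \<kappa>)/2) * v^2))"
    using k by (intro gauss_fun_integrable) simp
  then show ?thesis by simp
qed

lemma dct_fN:
  fixes a b :: "real \<Rightarrow> complex"
  assumes k: "0 < \<kappa>" "\<kappa> < 1"
    and am[measurable]: "a \<in> borel_measurable lborel" and bm[measurable]: "b \<in> borel_measurable lborel"
    and an: "\<And>x. norm (a x) \<le> 1" and bn: "\<And>x. norm (b x) \<le> 1"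
  shows "(\<lambda>n. \<integral>s. (\<integral>v. a s * b v * complex_of_real (fN \<kappa> (Suc n) s v) \<partial>lborel) \<partial>lborel)
           \<longlonglongrightarrow> (\<integral>s. (\<integral>v. a s * b v * complex_of_real (finf \<kappa> s v) \<partial>lborel) \<partial>lborel)"
proof (rule dct_iter[where Da="\<lambda>s. exp (1/768) * exp (- (s^2)/768)" and Db="\<lambda>v. exp (- \<kappa> * (1 - \<kappa>)/2 * v^2)"])
  show "integrable lborel (\<lambda>s::real. exp (1/768) * exp (- (s^2)/768))" by (rule D1_integrable)
  show "integrable lborel (\<lambda>v::real. exp (- \<kappa> * (1 - \<kappa>)/2 * v^2))" using k by (rule D2_integrable)
  show "\<bar>fN \<kappa> (Suc n) s v\<bar> \<le> exp (1/768) * exp (- (s^2)/768) * exp (- \<kappa> * (1 - \<kappa>)/2 * v^2)" for n s v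
    using fN_bound[of "Suc n" \<kappa> s v] fN_nonneg[of \<kappa> "Suc n" s v] by simp
  show "(\<lambda>n. fN \<kappa> (Suc n) s v) \<longlonglongrightarrow> finf \<kappa> s v" for s v
    using fN_lim by (rule LIMSEQ_Suc)
qed (use an bn in auto)

lemma norm_iexp_le: "norm (iexp (t * x)) \<le> 1"
  by simp

lemma core:
  fixes \<kappa> t :: real and \<Omega> :: "nat \<Rightarrow> 'a set" and P Q :: "nat \<Rightarrow> 'a \<Rightarrow> real" and K :: "nat \<Rightarrow> real"
  assumes k0: "0 < \<kappa>" and k1: "\<kappa> < 1"
    and fin: "\<And>n. finite (\<Omega> n)" and ne: "\<And>n. \<Omega> n \<noteq> {}"
    and mgf: "\<And>n x y. n \<ge> 1 \<Longrightarrow> (\<Sum>\<sigma>\<in>\<Omega> n. exp (x * P n \<sigma> + y * Q n \<sigma>)) = K n * (cosh (x + y) * cosh (x - y)) ^ n"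
  shows core_Q: "(\<lambda>n. \<Sum>\<sigma>\<in>\<Omega> n. complex_of_real (wt \<kappa> n (P n \<sigma>) (Q n \<sigma>) / (\<Sum>\<tau>\<in>\<Omega> n. wt \<kappa> n (P n \<tau>) (Q n \<tau>)))
                     * iexp (t * (Q n \<sigma> / qq n ^ 2)))
            \<longlonglongrightarrow> complex_of_real (exp (- (t^2) / (2 * (1 - \<kappa>))))"
    and core_P: "(\<lambda>n. \<Sum>\<sigma>\<in>\<Omega> n. complex_of_real (wt \<kappa> n (P n \<sigma>) (Q n \<sigma>) / (\<Sum>\<tau>\<in>\<Omega> n. wt \<kappa> n (P n \<tau>) (Q n \<tau>)))
                     * iexp (t * (P n \<sigma> / qq n ^ 3)))
            \<longlonglongrightarrow> (\<integral>s. e1 s *\<^sub>R iexp (t * s) \<partial>lborel) / complex_of_real (\<integral>s. e1 s \<partial>lborel)"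
proof -
  define W where "W n = (\<Sum>\<tau>\<in>\<Omega> n. wt \<kappa> n (P n \<tau>) (Q n \<tau>))" for n
  have Wpos: "0 < W n" for n unfolding W_def using fin ne by (intro sum_pos) (auto simp: wt_def)
  define Cn where "Cn n = c1 n * c2 \<kappa> * K n" for n
  have Cpos: "0 < Cn n" if n: "n \<ge> 1" for n
    unfolding Cn_def using c1_pos[OF n] c2_pos[OF k0] K_pos[OF fin ne mgf[OF n]] by simp
  define A where "A n a b = (\<integral>s. (\<integral>v. a s * b v * complex_of_real (fN \<kappa> n s v) \<partial>lborel) \<partial>lborel)"
    for n and a b :: "real \<Rightarrow> complex"
  define gQ where "gQ = exp (- (((1 / sqrt \<kappa>) * t)^2) / 2)"
  define gP where "gP n = exp (- (((1 / qq n) * t)^2) / 2)" for n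
  define SQ where "SQ n = (\<Sum>\<sigma>\<in>\<Omega> n. complex_of_real (wt \<kappa> n (P n \<sigma>) (Q n \<sigma>)) * iexp (t * (Q n \<sigma> / qq n ^ 2)))" for n
  define SP where "SP n = (\<Sum>\<sigma>\<in>\<Omega> n. complex_of_real (wt \<kappa> n (P n \<sigma>) (Q n \<sigma>)) * iexp (t * (P n \<sigma> / qq n ^ 3)))" for n
  have sq1: "0 < 1 / sqrt \<kappa>" using k0 by simp
  have sqq: "n \<ge> 1 \<Longrightarrow> 0 < 1 / qq n" for n using qq_pos by simp
  have IF: "A n a b = complex_of_real (1 / Cn n) *
       (\<Sum>\<sigma>\<in>\<Omega> n. complex_of_real (wt \<kappa> n (P n \<sigma>) (Q n \<sigma>))
              * (\<integral>s. normal_density (P n \<sigma> / qq n ^ 3) (1 / qq n) s *\<^sub>R a s \<partial>lborel)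
              * (\<integral>v. normal_density (Q n \<sigma> / qq n ^ 2) (1 / sqrt \<kappa>) v *\<^sub>R b v \<partial>lborel))"
    if n: "n \<ge> 1" and am: "a \<in> borel_measurable lborel" and bm: "b \<in> borel_measurable lborel"
      and an: "\<And>x. norm (a x) \<le> 1" and bn: "\<And>x. norm (b x) \<le> 1" for n a b
    unfolding A_def Cn_def
    by (rule int_formula[OF n k0 fin K_pos[OF fin ne mgf[OF n]] mgf[OF n] am bm an bn])
  have Den: "A n (\<lambda>_. 1) (\<lambda>_. 1) = complex_of_real (1 / Cn n) * complex_of_real (W n)" if n: "n \<ge> 1" for n
  proof -
    have "A n (\<lambda>_. 1) (\<lambda>_. 1) = complex_of_real (1 / Cn n) *
       (\<Sum>\<sigma>\<in>\<Omega> n. complex_of_real (wt \<kappa> n (P n \<sigma>) (Q n \<sigma>))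
              * (\<integral>s. normal_density (P n \<sigma> / qq n ^ 3) (1 / qq n) s *\<^sub>R (1::complex) \<partial>lborel)
              * (\<integral>v. normal_density (Q n \<sigma> / qq n ^ 2) (1 / sqrt \<kappa>) v *\<^sub>R (1::complex) \<partial>lborel))"
      by (rule IF[OF n]) auto
    also have "\<dots> = complex_of_real (1 / Cn n) * complex_of_real (W n)"
      unfolding gauss_one[OF sqq[OF n]] gauss_one[OF sq1] W_def by simp
    finally show ?thesis .
  qed
  have NQ: "A n (\<lambda>_. 1) (\<lambda>v. iexp (t * v)) = complex_of_real (1 / Cn n) * (SQ n * complex_of_real gQ)"
    if n: "n \<ge> 1" for n
  proof -
    have "A n (\<lambda>_. 1) (\<lambda>v. iexp (t * v)) = complex_of_real (1 / Cn n) *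
       (\<Sum>\<sigma>\<in>\<Omega> n. complex_of_real (wt \<kappa> n (P n \<sigma>) (Q n \<sigma>))
              * (\<integral>s. normal_density (P n \<sigma> / qq n ^ 3) (1 / qq n) s *\<^sub>R (1::complex) \<partial>lborel)
              * (\<integral>v. normal_density (Q n \<sigma> / qq n ^ 2) (1 / sqrt \<kappa>) v *\<^sub>R iexp (t * v) \<partial>lborel))"
      by (rule IF[OF n]) auto
    also have "\<dots> = complex_of_real (1 / Cn n) * (SQ n * complex_of_real gQ)"
      unfolding gauss_one[OF sqq[OF n]] gauss_char[OF sq1] SQ_def gQ_def
      by (simp add: sum_distrib_left sum_distrib_right mult_ac)
    finally show ?thesis .
  qed
  have NP: "A n (\<lambda>s. iexp (t * s)) (\<lambda>_. 1) = complex_of_real (1 / Cn n) * (SP n * complex_of_real (gP n))"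
    if n: "n \<ge> 1" for n
  proof -
    have "A n (\<lambda>s. iexp (t * s)) (\<lambda>_. 1) = complex_of_real (1 / Cn n) *
       (\<Sum>\<sigma>\<in>\<Omega> n. complex_of_real (wt \<kappa> n (P n \<sigma>) (Q n \<sigma>))
              * (\<integral>s. normal_density (P n \<sigma> / qq n ^ 3) (1 / qq n) s *\<^sub>R iexp (t * s) \<partial>lborel)
              * (\<integral>v. normal_density (Q n \<sigma> / qq n ^ 2) (1 / sqrt \<kappa>) v *\<^sub>R (1::complex) \<partial>lborel))"
      by (rule IF[OF n]) auto
    also have "\<dots> = complex_of_real (1 / Cn n) * (SP n * complex_of_real (gP n))"
      unfolding gauss_one[OF sq1] gauss_char[OF sqq[OF n]] SP_def gP_def
      by (simp add: sum_distrib_left sum_distrib_right mult_ac)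
    finally show ?thesis .
  qed
  have chQ: "(\<Sum>\<sigma>\<in>\<Omega> n. complex_of_real (wt \<kappa> n (P n \<sigma>) (Q n \<sigma>) / W n) * iexp (t * (Q n \<sigma> / qq n ^ 2)))
      = A n (\<lambda>_. 1) (\<lambda>v. iexp (t * v)) / A n (\<lambda>_. 1) (\<lambda>_. 1) / complex_of_real (gQ)" if n: "n \<ge> 1" for n
  proof -
    have nz: "complex_of_real (gQ) \<noteq> 0" "complex_of_real (W n) \<noteq> 0" "complex_of_real (1 / Cn n) \<noteq> 0"
      using Wpos[of n] Cpos[OF n] by (auto simp: gQ_def gP_def)
    have L: "(\<Sum>\<sigma>\<in>\<Omega> n. complex_of_real (wt \<kappa> n (P n \<sigma>) (Q n \<sigma>) / W n) * iexp (t * (Q n \<sigma> / qq n ^ 2)))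
        = SQ n / complex_of_real (W n)"
      unfolding SQ_def sum_divide_distrib by (intro sum.cong refl) simp
    have R: "complex_of_real (1 / Cn n) * (SQ n * complex_of_real (gQ)) / (complex_of_real (1 / Cn n) * complex_of_real (W n))
        / complex_of_real (gQ) = SQ n / complex_of_real (W n)"
      using nz by (simp add: field_simps)
    show ?thesis unfolding L NQ[OF n] Den[OF n] R ..
  qed
  have chP: "(\<Sum>\<sigma>\<in>\<Omega> n. complex_of_real (wt \<kappa> n (P n \<sigma>) (Q n \<sigma>) / W n) * iexp (t * (P n \<sigma> / qq n ^ 3)))
      = A n (\<lambda>s. iexp (t * s)) (\<lambda>_. 1) / A n (\<lambda>_. 1) (\<lambda>_. 1) / complex_of_real (gP n)" if n: "n \<ge> 1" for n
  proof -
    have nz: "complex_of_real (gP n) \<noteq> 0" "complex_of_real (W n) \<noteq> 0" "complex_of_real (1 / Cn n) \<noteq> 0"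
      using Wpos[of n] Cpos[OF n] by (auto simp: gQ_def gP_def)
    have L: "(\<Sum>\<sigma>\<in>\<Omega> n. complex_of_real (wt \<kappa> n (P n \<sigma>) (Q n \<sigma>) / W n) * iexp (t * (P n \<sigma> / qq n ^ 3)))
        = SP n / complex_of_real (W n)"
      unfolding SP_def sum_divide_distrib by (intro sum.cong refl) simp
    have R: "complex_of_real (1 / Cn n) * (SP n * complex_of_real (gP n)) / (complex_of_real (1 / Cn n) * complex_of_real (W n))
        / complex_of_real (gP n) = SP n / complex_of_real (W n)"
      using nz by (simp add: field_simps)
    show ?thesis unfolding L NP[OF n] Den[OF n] R ..
  qed
  define c where "c = \<kappa> * (1 - \<kappa>) / 2"
  define sv where "sv = 1 / sqrt (2 * c)"
  define A0 where "A0 = (\<integral>s. e1 s \<partial>lborel)"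
  have A0: "0 < A0" unfolding A0_def by (rule e1_int_pos)
  have c: "0 < c" using k0 k1 by (simp add: c_def)
  have sv: "0 < sv" using c by (simp add: sv_def)
  have e1one: "(\<integral>s. e1 s *\<^sub>R (1::complex) \<partial>lborel) = complex_of_real A0"
    unfolding A0_def by (simp add: scaleR_conv_of_real)
  have LD: "(\<lambda>n. A (Suc n) (\<lambda>_. 1) (\<lambda>_. 1)) \<longlonglongrightarrow> complex_of_real A0 * complex_of_real (sqrt (pi / c))"
  proof -
    have "(\<lambda>n. A (Suc n) (\<lambda>_. 1) (\<lambda>_. 1)) \<longlonglongrightarrow> (\<integral>s. (\<integral>v. 1 * 1 * complex_of_real (finf \<kappa> s v) \<partial>lborel) \<partial>lborel)"
      unfolding A_def by (rule dct_fN[OF k0 k1]) auto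
    also have "(\<integral>s. (\<integral>v. 1 * 1 * complex_of_real (finf \<kappa> s v) \<partial>lborel) \<partial>lborel)
        = complex_of_real A0 * complex_of_real (sqrt (pi / c))"
      using finf_integral[OF k0 k1, of "\<lambda>_. 1" "\<lambda>_. 1"] gauss_one[OF sv]
      unfolding e1one c_def[symmetric] sv_def[symmetric] by (simp add: scaleR_conv_of_real)
    finally show ?thesis .
  qed
  have LQ: "(\<lambda>n. A (Suc n) (\<lambda>_. 1) (\<lambda>v. iexp (t * v))) \<longlonglongrightarrow>
      complex_of_real A0 * complex_of_real (sqrt (pi / c)) * complex_of_real (exp (- ((sv * t)^2) / 2))"
  proof -
    have "(\<lambda>n. A (Suc n) (\<lambda>_. 1) (\<lambda>v. iexp (t * v))) \<longlonglongrightarrow>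
        (\<integral>s. (\<integral>v. 1 * iexp (t * v) * complex_of_real (finf \<kappa> s v) \<partial>lborel) \<partial>lborel)"
      unfolding A_def by (rule dct_fN[OF k0 k1]) auto
    also have "(\<integral>s. (\<integral>v. 1 * iexp (t * v) * complex_of_real (finf \<kappa> s v) \<partial>lborel) \<partial>lborel)
        = complex_of_real A0 * complex_of_real (sqrt (pi / c)) * complex_of_real (exp (- ((sv * t)^2) / 2))"
      using finf_integral[OF k0 k1, of "\<lambda>_. 1" "\<lambda>v. iexp (t * v)"] gauss_char[OF sv, of 0 t]
      unfolding e1one c_def[symmetric] sv_def[symmetric] by (simp add: scaleR_conv_of_real)
    finally show ?thesis .
  qed
  have LP: "(\<lambda>n. A (Suc n) (\<lambda>s. iexp (t * s)) (\<lambda>_. 1)) \<longlonglongrightarrow>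
      (\<integral>s. e1 s *\<^sub>R iexp (t * s) \<partial>lborel) * complex_of_real (sqrt (pi / c))"
  proof -
    have "(\<lambda>n. A (Suc n) (\<lambda>s. iexp (t * s)) (\<lambda>_. 1)) \<longlonglongrightarrow>
        (\<integral>s. (\<integral>v. iexp (t * s) * 1 * complex_of_real (finf \<kappa> s v) \<partial>lborel) \<partial>lborel)"
      unfolding A_def by (rule dct_fN[OF k0 k1]) auto
    also have "(\<integral>s. (\<integral>v. iexp (t * s) * 1 * complex_of_real (finf \<kappa> s v) \<partial>lborel) \<partial>lborel)
        = (\<integral>s. e1 s *\<^sub>R iexp (t * s) \<partial>lborel) * complex_of_real (sqrt (pi / c))"
      using finf_integral[OF k0 k1, of "\<lambda>s. iexp (t * s)" "\<lambda>_. 1"] gauss_one[OF sv]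
      unfolding c_def[symmetric] sv_def[symmetric] by (simp add: scaleR_conv_of_real)
    finally show ?thesis .
  qed
  have nz: "complex_of_real A0 * complex_of_real (sqrt (pi / c)) \<noteq> 0" using A0 c by simp
  have gP_lim: "(\<lambda>n. gP (Suc n)) \<longlonglongrightarrow> 1"
  proof -
    have "(\<lambda>n. inverse (qq n)) \<longlonglongrightarrow> 0" using qq_at_top by (rule tendsto_inverse_0_at_top)
    then have "(\<lambda>n. exp (- (((inverse (qq n)) * t)^2) / 2)) \<longlonglongrightarrow> exp (- ((0 * t)^2) / 2)"
      by (intro tendsto_intros) simp_all
    moreover have "gP = (\<lambda>n. exp (- (((inverse (qq n)) * t)^2) / 2))"
      by (rule ext) (simp only: gP_def divide_inverse mult_1)
    ultimately have "gP \<longlonglongrightarrow> 1" by simp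
    then show ?thesis by (rule LIMSEQ_Suc)
  qed
  show "(\<lambda>n. \<Sum>\<sigma>\<in>\<Omega> n. complex_of_real (wt \<kappa> n (P n \<sigma>) (Q n \<sigma>) / (\<Sum>\<tau>\<in>\<Omega> n. wt \<kappa> n (P n \<tau>) (Q n \<tau>)))
                     * iexp (t * (Q n \<sigma> / qq n ^ 2)))
            \<longlonglongrightarrow> complex_of_real (exp (- (t^2) / (2 * (1 - \<kappa>))))"
  proof (rule LIMSEQ_imp_Suc)
    have "(\<lambda>n. A (Suc n) (\<lambda>_. 1) (\<lambda>v. iexp (t * v)) / A (Suc n) (\<lambda>_. 1) (\<lambda>_. 1) / complex_of_real gQ)
       \<longlonglongrightarrow> (complex_of_real A0 * complex_of_real (sqrt (pi / c)) * complex_of_real (exp (- ((sv * t)^2) / 2)))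
            / (complex_of_real A0 * complex_of_real (sqrt (pi / c))) / complex_of_real gQ"
      using LQ LD nz by (intro tendsto_divide tendsto_const) (auto simp: gQ_def)
    also have "(complex_of_real A0 * complex_of_real (sqrt (pi / c)) * complex_of_real (exp (- ((sv * t)^2) / 2)))
            / (complex_of_real A0 * complex_of_real (sqrt (pi / c))) / complex_of_real gQ
        = complex_of_real (exp (- (t^2) / (2 * (1 - \<kappa>))))"
    proof -
      have "exp (- ((sv * t)^2) / 2) / gQ = exp (- (t^2) / (2 * (1 - \<kappa>)))"
        unfolding gQ_def exp_diff[symmetric]
      proof (rule arg_cong[where f=exp])
        have sv2: "sv^2 = 1 / (\<kappa> * (1 - \<kappa>))" using c by (simp add: sv_def c_def power_divide)
        have k2: "(1 / sqrt \<kappa>)^2 = 1 / \<kappa>" using k0 by (simp add: power_divide)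
        have "1 - \<kappa> \<noteq> 0" using k1 by simp
        then show "- ((sv * t)^2) / 2 - - (((1 / sqrt \<kappa>) * t)^2) / 2 = - (t^2) / (2 * (1 - \<kappa>))"
          unfolding power_mult_distrib sv2 k2 using k0 by (simp add: field_simps)
      qed
      then show ?thesis using nz by (simp add: of_real_divide[symmetric] del: of_real_divide)
    qed
    finally show "(\<lambda>n. \<Sum>\<sigma>\<in>\<Omega> (Suc n). complex_of_real (wt \<kappa> (Suc n) (P (Suc n) \<sigma>) (Q (Suc n) \<sigma>) / (\<Sum>\<tau>\<in>\<Omega> (Suc n). wt \<kappa> (Suc n) (P (Suc n) \<tau>) (Q (Suc n) \<tau>)))
                     * iexp (t * (Q (Suc n) \<sigma> / qq (Suc n) ^ 2)))
            \<longlonglongrightarrow> complex_of_real (exp (- (t^2) / (2 * (1 - \<kappa>))))"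
      using chQ unfolding W_def by simp
  qed
  show "(\<lambda>n. \<Sum>\<sigma>\<in>\<Omega> n. complex_of_real (wt \<kappa> n (P n \<sigma>) (Q n \<sigma>) / (\<Sum>\<tau>\<in>\<Omega> n. wt \<kappa> n (P n \<tau>) (Q n \<tau>)))
                     * iexp (t * (P n \<sigma> / qq n ^ 3)))
            \<longlonglongrightarrow> (\<integral>s. e1 s *\<^sub>R iexp (t * s) \<partial>lborel) / complex_of_real (\<integral>s. e1 s \<partial>lborel)"
  proof (rule LIMSEQ_imp_Suc)
    have "(\<lambda>n. A (Suc n) (\<lambda>s. iexp (t * s)) (\<lambda>_. 1) / A (Suc n) (\<lambda>_. 1) (\<lambda>_. 1) / complex_of_real (gP (Suc n)))
       \<longlonglongrightarrow> ((\<integral>s. e1 s *\<^sub>R iexp (t * s) \<partial>lborel) * complex_of_real (sqrt (pi / c)))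
            / (complex_of_real A0 * complex_of_real (sqrt (pi / c))) / complex_of_real 1"
      using LP LD nz gP_lim by (intro tendsto_divide tendsto_of_real) auto
    also have "((\<integral>s. e1 s *\<^sub>R iexp (t * s) \<partial>lborel) * complex_of_real (sqrt (pi / c)))
            / (complex_of_real A0 * complex_of_real (sqrt (pi / c))) / complex_of_real 1
        = (\<integral>s. e1 s *\<^sub>R iexp (t * s) \<partial>lborel) / complex_of_real (\<integral>s. e1 s \<partial>lborel)"
      using nz c unfolding A0_def by (simp add: field_simps)
    finally show "(\<lambda>n. \<Sum>\<sigma>\<in>\<Omega> (Suc n). complex_of_real (wt \<kappa> (Suc n) (P (Suc n) \<sigma>) (Q (Suc n) \<sigma>) / (\<Sum>\<tau>\<in>\<Omega> (Suc n). wt \<kappa> (Suc n) (P (Suc n) \<tau>) (Q (Suc n) \<tau>)))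
                     * iexp (t * (P (Suc n) \<sigma> / qq (Suc n) ^ 3)))
            \<longlonglongrightarrow> (\<integral>s. e1 s *\<^sub>R iexp (t * s) \<partial>lborel) / complex_of_real (\<integral>s. e1 s \<partial>lborel)"
      using chP unfolding W_def by simp
  qed
qed

lemma spin_finite: "finite (spin_configs N)"
  unfolding spin_configs_def by (rule finite_PiE) auto

lemma spin_ne: "spin_configs N \<noteq> {}"
  unfolding spin_configs_def by (auto simp: PiE_eq_empty_iff)

lemma ham_eq:
  assumes S: "S \<subseteq> {1..N}"
  shows "block_hamiltonian N \<alpha> \<beta> S \<sigma> =
     - (\<beta> / (2 * real N)) * ((\<Sum>i\<in>S. \<sigma> i)^2 + (\<Sum>i\<in>{1..N} - S. \<sigma> i)^2)
     - (\<alpha> / (2 * real N)) * (2 * (\<Sum>i\<in>S. \<sigma> i) * (\<Sum>i\<in>{1..N} - S. \<sigma> i))"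
proof -
  define R where "R = {1..N} - S"
  have fS: "finite S" using S finite_subset by blast
  have fR: "finite R" by (simp add: R_def)
  have dSR: "S \<inter> R = {}" by (auto simp: R_def)
  have e1: "{(i,j). i \<in> {1..N} \<and> j \<in> {1..N} \<and> same_block S i j} = S \<times> S \<union> R \<times> R"
    using S by (auto simp: same_block_def R_def)
  have e2: "{(i,j). i \<in> {1..N} \<and> j \<in> {1..N} \<and> \<not> same_block S i j} = S \<times> R \<union> R \<times> S"
    using S by (auto simp: same_block_def R_def)
  have prod: "(\<Sum>(i,j)\<in>X \<times> Y. \<sigma> i * \<sigma> j) = (\<Sum>i\<in>X. \<sigma> i) * (\<Sum>j\<in>Y. \<sigma> j)" if "finite X" "finite Y" for X Y
    using that by (simp add: sum_product sum.cartesian_product)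
  have s1: "(\<Sum>(i,j)\<in>S \<times> S \<union> R \<times> R. \<sigma> i * \<sigma> j) = (\<Sum>i\<in>S. \<sigma> i)^2 + (\<Sum>i\<in>R. \<sigma> i)^2"
  proof -
    have "(\<Sum>(i,j)\<in>S \<times> S \<union> R \<times> R. \<sigma> i * \<sigma> j) = (\<Sum>(i,j)\<in>S \<times> S. \<sigma> i * \<sigma> j) + (\<Sum>(i,j)\<in>R \<times> R. \<sigma> i * \<sigma> j)"
      by (rule sum.union_disjoint) (use fS fR dSR in auto)
    then show ?thesis using prod fS fR by (simp add: power2_eq_square)
  qed
  have s2: "(\<Sum>(i,j)\<in>S \<times> R \<union> R \<times> S. \<sigma> i * \<sigma> j) = 2 * (\<Sum>i\<in>S. \<sigma> i) * (\<Sum>i\<in>R. \<sigma> i)"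
  proof -
    have "(\<Sum>(i,j)\<in>S \<times> R \<union> R \<times> S. \<sigma> i * \<sigma> j) = (\<Sum>(i,j)\<in>S \<times> R. \<sigma> i * \<sigma> j) + (\<Sum>(i,j)\<in>R \<times> S. \<sigma> i * \<sigma> j)"
      by (rule sum.union_disjoint) (use fS fR dSR in auto)
    then show ?thesis using prod fS fR by simp
  qed
  show ?thesis unfolding block_hamiltonian_def e1 e2 s1 s2 R_def[symmetric] ..
qed

lemma mgf_spin:
  assumes "finite I"
  shows "(\<Sum>\<sigma>\<in>PiE I (\<lambda>_. {-1, 1::real}). exp (\<Sum>i\<in>I. c i * \<sigma> i)) = (\<Prod>i\<in>I. 2 * cosh (c i))"
proof -
  have "(\<Prod>i\<in>I. 2 * cosh (c i)) = (\<Prod>i\<in>I. \<Sum>y\<in>{-1, 1::real}. exp (c i * y))"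
    by (intro prod.cong refl) (simp add: cosh_field_def)
  also have "\<dots> = (\<Sum>g\<in>PiE I (\<lambda>_. {-1, 1::real}). \<Prod>i\<in>I. exp (c i * g i))"
    by (rule prod_sum_PiE) (use assms in auto)
  also have "\<dots> = (\<Sum>\<sigma>\<in>PiE I (\<lambda>_. {-1, 1::real}). exp (\<Sum>i\<in>I. c i * \<sigma> i))"
    using assms by (simp add: exp_sum)
  finally show ?thesis ..
qed

lemma mgf_block:
  assumes S: "S \<subseteq> {1..2*n}" and cS: "card S = n"
  shows "(\<Sum>\<sigma>\<in>spin_configs (2*n). exp (a * (\<Sum>i\<in>S. \<sigma> i) + b * (\<Sum>i\<in>{1..2*n} - S. \<sigma> i)))
       = 4^n * (cosh a * cosh b)^n"
proof -
  define I where "I = {1..2*n}"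
  define R where "R = I - S"
  define c where "c i = (if i \<in> S then a else b)" for i
  have fS: "finite S" using S finite_subset by blast
  have cR: "card R = n" unfolding R_def I_def using S cS by (subst card_Diff_subset) (auto simp: fS)
  have SR: "I = S \<union> R" "S \<inter> R = {}" using S by (auto simp: R_def I_def)
  have lin: "a * (\<Sum>i\<in>S. \<sigma> i) + b * (\<Sum>i\<in>R. \<sigma> i) = (\<Sum>i\<in>I. c i * \<sigma> i)" for \<sigma> :: "nat \<Rightarrow> real"
  proof -
    have "(\<Sum>i\<in>I. c i * \<sigma> i) = (\<Sum>i\<in>S. c i * \<sigma> i) + (\<Sum>i\<in>R. c i * \<sigma> i)"
      unfolding SR(1) by (rule sum.union_disjoint) (use fS SR in \<open>auto simp: R_def I_def\<close>)
    also have "(\<Sum>i\<in>S. c i * \<sigma> i) = a * (\<Sum>i\<in>S. \<sigma> i)" by (simp add: c_def sum_distrib_left)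
    also have "(\<Sum>i\<in>R. c i * \<sigma> i) = b * (\<Sum>i\<in>R. \<sigma> i)" by (simp add: c_def sum_distrib_left R_def)
    finally show ?thesis ..
  qed
  have "(\<Sum>\<sigma>\<in>spin_configs (2*n). exp (a * (\<Sum>i\<in>S. \<sigma> i) + b * (\<Sum>i\<in>{1..2*n} - S. \<sigma> i)))
      = (\<Sum>\<sigma>\<in>PiE I (\<lambda>_. {-1, 1::real}). exp (\<Sum>i\<in>I. c i * \<sigma> i))"
    unfolding spin_configs_def I_def[symmetric] R_def[symmetric] lin ..
  also have "\<dots> = (\<Prod>i\<in>I. 2 * cosh (c i))" by (rule mgf_spin) (simp add: I_def)
  also have "\<dots> = (\<Prod>i\<in>S. 2 * cosh (c i)) * (\<Prod>i\<in>R. 2 * cosh (c i))"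
    unfolding SR(1) by (rule prod.union_disjoint) (use fS SR in \<open>auto simp: R_def I_def\<close>)
  also have "\<dots> = (2 * cosh a)^n * (2 * cosh b)^n"
    using cS cR by (simp add: c_def R_def)
  also have "\<dots> = 4^n * (cosh a * cosh b)^n"
  proof -
    have "(4::real)^n = (2*2)^n" by simp
    also have "\<dots> = 2^n * 2^n" by (rule power_mult_distrib)
    finally show ?thesis by (simp add: power_mult_distrib)
  qed
  finally show ?thesis .
qed

lemma partition_pos: "0 < partition_fn N \<alpha> \<beta> S"
  unfolding partition_fn_def using spin_finite spin_ne by (intro sum_pos) auto

lemma pmf_gibbs: "pmf (gibbs_pmf N \<alpha> \<beta> S) \<sigma> = (if \<sigma> \<in> spin_configs N
       then exp (- block_hamiltonian N \<alpha> \<beta> S \<sigma>) / partition_fn N \<alpha> \<beta> S else 0)"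
  unfolding gibbs_pmf_def
proof (rule pmf_embed_pmf)
  show "0 \<le> (if x \<in> spin_configs N then exp (- block_hamiltonian N \<alpha> \<beta> S x) / partition_fn N \<alpha> \<beta> S else 0)" for x
    using partition_pos[of N \<alpha> \<beta> S] by auto
  have "(\<integral>\<^sup>+x. ennreal (if x \<in> spin_configs N then exp (- block_hamiltonian N \<alpha> \<beta> S x) / partition_fn N \<alpha> \<beta> S else 0) \<partial>count_space UNIV)
      = (\<Sum>x\<in>spin_configs N. ennreal (if x \<in> spin_configs N then exp (- block_hamiltonian N \<alpha> \<beta> S x) / partition_fn N \<alpha> \<beta> S else 0))"
    by (rule nn_integral_count_space') (auto simp: spin_finite)
  also have "\<dots> = ennreal (\<Sum>x\<in>spin_configs N. exp (- block_hamiltonian N \<alpha> \<beta> S x) / partition_fn N \<alpha> \<beta> S)"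
    using partition_pos[of N \<alpha> \<beta> S] by (subst sum_ennreal) auto
  also have "(\<Sum>x\<in>spin_configs N. exp (- block_hamiltonian N \<alpha> \<beta> S x) / partition_fn N \<alpha> \<beta> S) = 1"
    using partition_pos[of N \<alpha> \<beta> S] unfolding sum_divide_distrib[symmetric] by (simp add: partition_fn_def)
  finally show "(\<integral>\<^sup>+x. ennreal (if x \<in> spin_configs N then exp (- block_hamiltonian N \<alpha> \<beta> S x) / partition_fn N \<alpha> \<beta> S else 0) \<partial>count_space UNIV) = 1"
    by simp
qed

lemma set_pmf_gibbs: "set_pmf (gibbs_pmf N \<alpha> \<beta> S) \<subseteq> spin_configs N"
  by (auto simp: set_pmf_iff pmf_gibbs split: if_splits)

lemma law_char:
  fixes G :: "'a pmf" and T :: "'a \<Rightarrow> real"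
  assumes fin: "finite \<Omega>" and sub: "set_pmf G \<subseteq> \<Omega>"
  shows "char (distr (measure_pmf G) borel T) t = (\<Sum>\<sigma>\<in>\<Omega>. complex_of_real (pmf G \<sigma>) * iexp (t * T \<sigma>))"
proof -
  have "char (distr (measure_pmf G) borel T) t = (\<integral>\<sigma>. iexp (t * T \<sigma>) \<partial>measure_pmf G)"
    unfolding char_def by (subst integral_distr) auto
  also have "\<dots> = (\<Sum>\<sigma>\<in>\<Omega>. pmf G \<sigma> *\<^sub>R iexp (t * T \<sigma>))"
    by (rule integral_measure_pmf[OF fin]) (use sub in auto)
  finally show ?thesis by (simp add: scaleR_conv_of_real)
qed

lemma cdf_law: "cdf (measure_pmf (map_pmf T G)) = cdf (distr (measure_pmf G) borel T)"
  unfolding cdf_def by (rule ext) (simp add: measure_distr)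

lemma real_distr_law: "real_distribution (distr (measure_pmf G) borel (T :: _ \<Rightarrow> real))"
proof -
  have "prob_space (distr (measure_pmf G) borel T)"
    by (rule measure_pmf.prob_space_distr) auto
  then show ?thesis unfolding real_distribution_def real_distribution_axioms_def by simp
qed

lemma weak_from_char:
  fixes G :: "nat \<Rightarrow> 'a pmf" and T :: "nat \<Rightarrow> 'a \<Rightarrow> real"
  assumes M': "real_distribution M'"
    and ch: "\<And>t. (\<lambda>n. char (distr (measure_pmf (G n)) borel (T n)) t) \<longlonglongrightarrow> char M' t"
  shows "weak_conv_m (\<lambda>n. measure_pmf (map_pmf (T n) (G n))) M'"
proof -
  have "weak_conv_m (\<lambda>n. distr (measure_pmf (G n)) borel (T n)) M'"
    by (rule levy_continuity[OF real_distr_law M' ch])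
  then show ?thesis unfolding weak_conv_m_def cdf_law .
qed

lemma gaussian_real_distr: "0 < v \<Longrightarrow> real_distribution (gaussian v)"
  unfolding gaussian_def real_distribution_def real_distribution_axioms_def
  using prob_space_normal_density[where \<mu>=0 and \<sigma>="sqrt v"] by simp

lemma char_gaussian: "0 < v \<Longrightarrow> char (gaussian v) t = complex_of_real (exp (- (v * t^2) / 2))"
proof -
  assume v: "0 < v"
  have "char (gaussian v) t = (\<integral>x. normal_density 0 (sqrt v) x *\<^sub>R iexp (t * x) \<partial>lborel)"
    unfolding char_def gaussian_def by (subst integral_density) auto
  also have "\<dots> = iexp (t * 0) * complex_of_real (exp (- ((sqrt v * t)^2) / 2))"
    by (rule gauss_char) (use v in simp)
  also have "\<dots> = complex_of_real (exp (- (v * t^2) / 2))"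
    using v by (simp add: power_mult_distrib)
  finally show ?thesis .
qed

lemma e1_meas[measurable]: "e1 \<in> borel_measurable borel"
  unfolding e1_def by measurable

lemma rho_eq: "rho = density lborel (\<lambda>x. ennreal (e1 x / (\<integral>y. e1 y \<partial>lborel)))"
  unfolding rho_def e1_def ..

lemma rho_real_distr: "real_distribution rho"
proof -
  define A0 where "A0 = (\<integral>y. e1 y \<partial>lborel)"
  have A0: "0 < A0" unfolding A0_def by (rule e1_int_pos)
  have int: "integrable lborel (\<lambda>x. e1 x / A0)" using e1_integrable by simp
  have "emeasure (density lborel (\<lambda>x. ennreal (e1 x / A0))) UNIV = (\<integral>\<^sup>+x. ennreal (e1 x / A0) \<partial>lborel)"
    by (subst emeasure_density) auto
  also have "\<dots> = ennreal (\<integral>x. e1 x / A0 \<partial>lborel)"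
    using int A0 by (intro nn_integral_eq_integral) (auto simp: e1_def)
  also have "(\<integral>x. e1 x / A0 \<partial>lborel) = 1" using A0 by (simp add: A0_def)
  finally have "prob_space (density lborel (\<lambda>x. ennreal (e1 x / A0)))"
    by (intro prob_spaceI) simp
  then show ?thesis unfolding rho_eq A0_def[symmetric] real_distribution_def real_distribution_axioms_def by simp
qed

lemma char_rho: "char rho t = (\<integral>s. e1 s *\<^sub>R iexp (t * s) \<partial>lborel) / complex_of_real (\<integral>s. e1 s \<partial>lborel)"
proof -
  define A0 where "A0 = (\<integral>y. e1 y \<partial>lborel)"
  have A0: "0 < A0" unfolding A0_def by (rule e1_int_pos)
  have "char rho t = (\<integral>x. (e1 x / A0) *\<^sub>R iexp (t * x) \<partial>lborel)"
    unfolding char_def rho_eq A0_def[symmetric] using A0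
    by (subst integral_density) (auto simp: e1_def)
  also have "\<dots> = (\<integral>x. (1 / A0) *\<^sub>R (e1 x *\<^sub>R iexp (t * x)) \<partial>lborel)" by simp
  also have "\<dots> = (1 / A0) *\<^sub>R (\<integral>x. e1 x *\<^sub>R iexp (t * x) \<partial>lborel)" by (rule integral_scaleR_right)
  also have "\<dots> = (\<integral>s. e1 s *\<^sub>R iexp (t * s) \<partial>lborel) / complex_of_real A0"
    by (simp add: scaleR_conv_of_real field_simps)
  finally show ?thesis unfolding A0_def .
qed

lemma model_limits:
  fixes \<alpha> \<beta> \<kappa> :: real and S :: "nat \<Rightarrow> nat set" and P Q TQ TP :: "nat \<Rightarrow> (nat \<Rightarrow> real) \<Rightarrow> real"
  assumes k0: "0 < \<kappa>" and k1: "\<kappa> < 1"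
    and weight: "\<And>n \<sigma>. n \<ge> 1 \<Longrightarrow> \<sigma> \<in> spin_configs (2*n) \<Longrightarrow>
        exp (- block_hamiltonian (2*n) \<alpha> \<beta> (S n) \<sigma>) = wt \<kappa> n (P n \<sigma>) (Q n \<sigma>)"
    and mgf: "\<And>n x y. n \<ge> 1 \<Longrightarrow>
        (\<Sum>\<sigma>\<in>spin_configs (2*n). exp (x * P n \<sigma> + y * Q n \<sigma>)) = 4^n * (cosh (x + y) * cosh (x - y)) ^ n"
    and TQ: "\<And>n \<sigma>. n \<ge> 1 \<Longrightarrow> \<sigma> \<in> spin_configs (2*n) \<Longrightarrow> TQ n \<sigma> = Q n \<sigma> / qq n ^ 2"
    and TP: "\<And>n \<sigma>. n \<ge> 1 \<Longrightarrow> \<sigma> \<in> spin_configs (2*n) \<Longrightarrow> TP n \<sigma> = P n \<sigma> / qq n ^ 3"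
  shows "weak_conv_m (\<lambda>n. gibbs_law (2*n) \<alpha> \<beta> (S n) (TQ n)) (gaussian (1 / (1 - \<kappa>)))"
    and "weak_conv_m (\<lambda>n. gibbs_law (2*n) \<alpha> \<beta> (S n) (TP n)) rho"
proof -
  define G where "G n = gibbs_pmf (2*n) \<alpha> \<beta> (S n)" for n
  have pmfG: "pmf (G n) \<sigma> = complex_of_real (wt \<kappa> n (P n \<sigma>) (Q n \<sigma>) / (\<Sum>\<tau>\<in>spin_configs (2*n). wt \<kappa> n (P n \<tau>) (Q n \<tau>)))"
    if n: "n \<ge> 1" and s: "\<sigma> \<in> spin_configs (2*n)" for n \<sigma>
  proof -
    have "partition_fn (2*n) \<alpha> \<beta> (S n) = (\<Sum>\<tau>\<in>spin_configs (2*n). wt \<kappa> n (P n \<tau>) (Q n \<tau>))"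
      unfolding partition_fn_def by (rule sum.cong) (auto simp: weight[OF n])
    then show ?thesis unfolding G_def pmf_gibbs using s weight[OF n s] by simp
  qed
  have chG: "char (distr (measure_pmf (G n)) borel (T n)) t
      = (\<Sum>\<sigma>\<in>spin_configs (2*n). complex_of_real (wt \<kappa> n (P n \<sigma>) (Q n \<sigma>) / (\<Sum>\<tau>\<in>spin_configs (2*n). wt \<kappa> n (P n \<tau>) (Q n \<tau>)))
            * iexp (t * T n \<sigma>))" if n: "n \<ge> 1" for n t and T :: "nat \<Rightarrow> (nat \<Rightarrow> real) \<Rightarrow> real"
    unfolding law_char[OF spin_finite set_pmf_gibbs[of "2*n" \<alpha> \<beta> "S n", folded G_def]]
    by (rule sum.cong) (auto simp: pmfG[OF n])
  show "weak_conv_m (\<lambda>n. gibbs_law (2*n) \<alpha> \<beta> (S n) (TQ n)) (gaussian (1 / (1 - \<kappa>)))"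
    unfolding gibbs_law_def G_def[symmetric]
  proof (rule weak_from_char[OF gaussian_real_distr])
    show "0 < 1 / (1 - \<kappa>)" using k1 by simp
    fix t
    have lim: "(\<lambda>n. \<Sum>\<sigma>\<in>spin_configs (2*n). complex_of_real (wt \<kappa> n (P n \<sigma>) (Q n \<sigma>) / (\<Sum>\<tau>\<in>spin_configs (2*n). wt \<kappa> n (P n \<tau>) (Q n \<tau>)))
            * iexp (t * (Q n \<sigma> / qq n ^ 2))) \<longlonglongrightarrow> complex_of_real (exp (- (t^2) / (2 * (1 - \<kappa>))))"
      by (rule core_Q[where K="\<lambda>n. 4^n", OF k0 k1 spin_finite spin_ne mgf])
    have ev: "eventually (\<lambda>n. (\<Sum>\<sigma>\<in>spin_configs (2*n). complex_of_real (wt \<kappa> n (P n \<sigma>) (Q n \<sigma>) / (\<Sum>\<tau>\<in>spin_configs (2*n). wt \<kappa> n (P n \<tau>) (Q n \<tau>)))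
            * iexp (t * (Q n \<sigma> / qq n ^ 2))) = char (distr (measure_pmf (G n)) borel (TQ n)) t) sequentially"
    proof (rule eventually_sequentiallyI[of 1])
      fix n :: nat assume n: "n \<ge> 1"
      show "(\<Sum>\<sigma>\<in>spin_configs (2*n). complex_of_real (wt \<kappa> n (P n \<sigma>) (Q n \<sigma>) / (\<Sum>\<tau>\<in>spin_configs (2*n). wt \<kappa> n (P n \<tau>) (Q n \<tau>)))
            * iexp (t * (Q n \<sigma> / qq n ^ 2))) = char (distr (measure_pmf (G n)) borel (TQ n)) t"
        unfolding chG[OF n] by (rule sum.cong) (auto simp: TQ[OF n])
    qed
    have "char (gaussian (1 / (1 - \<kappa>))) t = complex_of_real (exp (- (t^2) / (2 * (1 - \<kappa>))))"
      using k1 by (subst char_gaussian) (auto simp: field_simps)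
    then show "(\<lambda>n. char (distr (measure_pmf (G n)) borel (TQ n)) t) \<longlonglongrightarrow> char (gaussian (1 / (1 - \<kappa>))) t"
      using Lim_transform_eventually[OF lim ev] by simp
  qed
  show "weak_conv_m (\<lambda>n. gibbs_law (2*n) \<alpha> \<beta> (S n) (TP n)) rho"
    unfolding gibbs_law_def G_def[symmetric]
  proof (rule weak_from_char[OF rho_real_distr])
    fix t
    have lim: "(\<lambda>n. \<Sum>\<sigma>\<in>spin_configs (2*n). complex_of_real (wt \<kappa> n (P n \<sigma>) (Q n \<sigma>) / (\<Sum>\<tau>\<in>spin_configs (2*n). wt \<kappa> n (P n \<tau>) (Q n \<tau>)))
            * iexp (t * (P n \<sigma> / qq n ^ 3))) \<longlonglongrightarrow> char rho t"
      unfolding char_rho by (rule core_P[where K="\<lambda>n. 4^n", OF k0 k1 spin_finite spin_ne mgf])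
    have ev: "eventually (\<lambda>n. (\<Sum>\<sigma>\<in>spin_configs (2*n). complex_of_real (wt \<kappa> n (P n \<sigma>) (Q n \<sigma>) / (\<Sum>\<tau>\<in>spin_configs (2*n). wt \<kappa> n (P n \<tau>) (Q n \<tau>)))
            * iexp (t * (P n \<sigma> / qq n ^ 3))) = char (distr (measure_pmf (G n)) borel (TP n)) t) sequentially"
    proof (rule eventually_sequentiallyI[of 1])
      fix n :: nat assume n: "n \<ge> 1"
      show "(\<Sum>\<sigma>\<in>spin_configs (2*n). complex_of_real (wt \<kappa> n (P n \<sigma>) (Q n \<sigma>) / (\<Sum>\<tau>\<in>spin_configs (2*n). wt \<kappa> n (P n \<tau>) (Q n \<tau>)))
            * iexp (t * (P n \<sigma> / qq n ^ 3))) = char (distr (measure_pmf (G n)) borel (TP n)) t"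
        unfolding chG[OF n] by (rule sum.cong) (auto simp: TP[OF n])
    qed
    show "(\<lambda>n. char (distr (measure_pmf (G n)) borel (TP n)) t) \<longlonglongrightarrow> char rho t"
      using Lim_transform_eventually[OF lim ev] .
  qed
qed

theorem theorem3p1:
  fixes \<alpha> \<beta> :: real and S :: "nat \<Rightarrow> nat set"
  assumes "\<beta> > 0" and "\<bar>\<alpha>\<bar> < \<beta>" and "\<bar>\<alpha>\<bar> + \<beta> = 2"
    and "\<And>n. S n \<subseteq> {1..2*n}" and "\<And>n. card (S n) = n"
  shows
    "(\<alpha> > 0 \<longrightarrow> weak_conv_m
        (\<lambda>n. gibbs_law (2*n) \<alpha> \<beta> (S n)
              (\<lambda>\<sigma>. sqrt (real (2*n)) / 2 * (mag1 (2*n) (S n) \<sigma> - mag2 (2*n) (S n) \<sigma>)))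
        (gaussian (2 / (2 - (\<beta> - \<alpha>)))))
   \<and> (\<alpha> < 0 \<longrightarrow> weak_conv_m
        (\<lambda>n. gibbs_law (2*n) \<alpha> \<beta> (S n)
              (\<lambda>\<sigma>. real (2*n) powr (1/4) / 2 * (mag1 (2*n) (S n) \<sigma> - mag2 (2*n) (S n) \<sigma>)))
        rho)
   \<and> (\<alpha> > 0 \<longrightarrow> weak_conv_m
        (\<lambda>n. gibbs_law (2*n) \<alpha> \<beta> (S n)
              (\<lambda>\<sigma>. real (2*n) powr (1/4) / 2 * (mag1 (2*n) (S n) \<sigma> + mag2 (2*n) (S n) \<sigma>)))
        rho)
   \<and> (\<alpha> < 0 \<longrightarrow> weak_conv_m
        (\<lambda>n. gibbs_law (2*n) \<alpha> \<beta> (S n)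
              (\<lambda>\<sigma>. sqrt (real (2*n)) / 2 * (mag1 (2*n) (S n) \<sigma> + mag2 (2*n) (S n) \<sigma>)))
        (gaussian (- 1 / \<alpha>)))"
proof -
  note Ssub = assms(4) and Scard = assms(5)
  define A where "A n \<sigma> = (\<Sum>i\<in>S n. \<sigma> i)" for n and \<sigma> :: "nat \<Rightarrow> real"
  define B where "B n \<sigma> = (\<Sum>i\<in>{1..2*n} - S n. \<sigma> i)" for n and \<sigma> :: "nat \<Rightarrow> real"
  have m1: "mag1 (2*n) (S n) \<sigma> = 2 / real (2*n) * A n \<sigma>" for n \<sigma> by (simp add: mag1_def A_def)
  have m2: "mag2 (2*n) (S n) \<sigma> = 2 / real (2*n) * B n \<sigma>" for n \<sigma> by (simp add: mag2_def B_def)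
  have negH: "- block_hamiltonian (2*n) \<alpha> \<beta> (S n) \<sigma>
      = (\<beta> * ((A n \<sigma>)^2 + (B n \<sigma>)^2) + 2 * \<alpha> * A n \<sigma> * B n \<sigma>) / (4 * real n)" if n: "n \<ge> 1" for n \<sigma>
    unfolding ham_eq[OF Ssub[of n]] A_def[symmetric] B_def[symmetric] using n by (simp add: field_simps)
  have TQf: "sqrt (real (2*n)) / 2 * (2 / real (2*n) * a) = a / qq n ^ 2" if n: "n \<ge> 1" for n a
  proof -
    define r where "r = sqrt (real (2*n))"
    have r: "0 < r" "real (2*n) = r^2" using n by (auto simp: r_def)
    show ?thesis unfolding qq_sq[OF n] r_def[symmetric] r(2) using r(1) by (simp add: field_simps power2_eq_square)
  qed
  have TPf: "real (2*n) powr (1/4) / 2 * (2 / real (2*n) * a) = a / qq n ^ 3" if n: "n \<ge> 1" for n a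
  proof -
    have q: "0 < qq n" "real (2*n) = qq n ^ 4" using qq_pos[OF n] qq_pow4[OF n] by auto
    have q3: "real (2*n) powr (1/4) = qq n" by (simp add: qq_def)
    show ?thesis unfolding q3 unfolding q(2) using q(1) by (simp add: field_simps power4_eq_xxxx power3_eq_cube)
  qed
  have mgfgen: "(\<Sum>\<sigma>\<in>spin_configs (2*n). exp (a * A n \<sigma> + b * B n \<sigma>)) = 4^n * (cosh a * cosh b)^n" for n a b
    unfolding A_def B_def by (rule mgf_block[OF Ssub Scard])
  have pos: "weak_conv_m
        (\<lambda>n. gibbs_law (2*n) \<alpha> \<beta> (S n)
              (\<lambda>\<sigma>. sqrt (real (2*n)) / 2 * (mag1 (2*n) (S n) \<sigma> - mag2 (2*n) (S n) \<sigma>)))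
        (gaussian (2 / (2 - (\<beta> - \<alpha>))))
     \<and> weak_conv_m
        (\<lambda>n. gibbs_law (2*n) \<alpha> \<beta> (S n)
              (\<lambda>\<sigma>. real (2*n) powr (1/4) / 2 * (mag1 (2*n) (S n) \<sigma> + mag2 (2*n) (S n) \<sigma>)))
        rho" if ap: "\<alpha> > 0"
  proof -
    define \<kappa> where "\<kappa> = (\<beta> - \<alpha>) / 2"
    have b: "\<beta> = 2 - \<alpha>" using assms(3) ap by simp
    have k0: "0 < \<kappa>" "\<kappa> < 1" using assms(2) ap b by (auto simp: \<kappa>_def)
    have var: "2 / (2 - (\<beta> - \<alpha>)) = 1 / (1 - \<kappa>)" unfolding \<kappa>_def using k0 by (simp add: field_simps \<kappa>_def)
      have w: "\<And>n \<sigma>. n \<ge> 1 \<Longrightarrow> \<sigma> \<in> spin_configs (2*n) \<Longrightarrow> exp (- block_hamiltonian (2*n) \<alpha> \<beta> (S n) \<sigma>) = wt \<kappa> n (A n \<sigma> + B n \<sigma>) (A n \<sigma> - B n \<sigma>)"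
        proof -
          fix n :: nat and \<sigma> :: "nat \<Rightarrow> real" assume n: "n \<ge> 1"
          show "exp (- block_hamiltonian (2*n) \<alpha> \<beta> (S n) \<sigma>) = wt \<kappa> n (A n \<sigma> + B n \<sigma>) (A n \<sigma> - B n \<sigma>)"
            unfolding negH[OF n] unfolding wt_def \<kappa>_def b using n by (simp add: field_simps power2_eq_square)
        qed
      have m: "\<And>n x y. n \<ge> 1 \<Longrightarrow> (\<Sum>\<sigma>\<in>spin_configs (2*n). exp (x * (A n \<sigma> + B n \<sigma>) + y * (A n \<sigma> - B n \<sigma>))) = 4^n * (cosh (x + y) * cosh (x - y)) ^ n"
      proof -
        fix n :: nat and x y :: real
        have "x * (A n \<sigma> + B n \<sigma>) + y * (A n \<sigma> - B n \<sigma>) = (x + y) * A n \<sigma> + (x - y) * B n \<sigma>" for \<sigma>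
          by (simp add: algebra_simps)
        then show "(\<Sum>\<sigma>\<in>spin_configs (2*n). exp (x * (A n \<sigma> + B n \<sigma>) + y * (A n \<sigma> - B n \<sigma>))) = 4^n * (cosh (x + y) * cosh (x - y)) ^ n" by (simp add: mgfgen)
      qed
      have tq: "\<And>n \<sigma>. n \<ge> 1 \<Longrightarrow> \<sigma> \<in> spin_configs (2*n) \<Longrightarrow> sqrt (real (2*n)) / 2 * (mag1 (2*n) (S n) \<sigma> - mag2 (2*n) (S n) \<sigma>) = (A n \<sigma> - B n \<sigma>) / qq n ^ 2"
      proof -
        fix n :: nat and \<sigma> :: "nat \<Rightarrow> real" assume n: "n \<ge> 1"
        show "sqrt (real (2*n)) / 2 * (mag1 (2*n) (S n) \<sigma> - mag2 (2*n) (S n) \<sigma>) = (A n \<sigma> - B n \<sigma>) / qq n ^ 2"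
          unfolding m1 m2 right_diff_distrib[symmetric] by (rule TQf[OF n])
      qed
      have tp: "\<And>n \<sigma>. n \<ge> 1 \<Longrightarrow> \<sigma> \<in> spin_configs (2*n) \<Longrightarrow> real (2*n) powr (1/4) / 2 * (mag1 (2*n) (S n) \<sigma> + mag2 (2*n) (S n) \<sigma>) = (A n \<sigma> + B n \<sigma>) / qq n ^ 3"
      proof -
        fix n :: nat and \<sigma> :: "nat \<Rightarrow> real" assume n: "n \<ge> 1"
        show "real (2*n) powr (1/4) / 2 * (mag1 (2*n) (S n) \<sigma> + mag2 (2*n) (S n) \<sigma>) = (A n \<sigma> + B n \<sigma>) / qq n ^ 3"
          unfolding m1 m2 distrib_left[symmetric] by (rule TPf[OF n])
      qed
    note r = model_limits[OF k0(1) k0(2) w m tq tp]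
    show ?thesis using r unfolding var by blast
  qed
  have neg: "weak_conv_m
        (\<lambda>n. gibbs_law (2*n) \<alpha> \<beta> (S n)
              (\<lambda>\<sigma>. real (2*n) powr (1/4) / 2 * (mag1 (2*n) (S n) \<sigma> - mag2 (2*n) (S n) \<sigma>)))
        rho
     \<and> weak_conv_m
        (\<lambda>n. gibbs_law (2*n) \<alpha> \<beta> (S n)
              (\<lambda>\<sigma>. sqrt (real (2*n)) / 2 * (mag1 (2*n) (S n) \<sigma> + mag2 (2*n) (S n) \<sigma>)))
        (gaussian (- 1 / \<alpha>))" if an: "\<alpha> < 0"
  proof -
    define \<kappa> where "\<kappa> = (\<beta> + \<alpha>) / 2"
    have b: "\<beta> = 2 + \<alpha>" using assms(3) an by simp
    have k0: "0 < \<kappa>" "\<kappa> < 1" using assms(2) an b by (auto simp: \<kappa>_def)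
    have var: "- 1 / \<alpha> = 1 / (1 - \<kappa>)" unfolding \<kappa>_def b using an by (simp add: field_simps)
      have w: "\<And>n \<sigma>. n \<ge> 1 \<Longrightarrow> \<sigma> \<in> spin_configs (2*n) \<Longrightarrow> exp (- block_hamiltonian (2*n) \<alpha> \<beta> (S n) \<sigma>) = wt \<kappa> n (A n \<sigma> - B n \<sigma>) (A n \<sigma> + B n \<sigma>)"
        proof -
          fix n :: nat and \<sigma> :: "nat \<Rightarrow> real" assume n: "n \<ge> 1"
          show "exp (- block_hamiltonian (2*n) \<alpha> \<beta> (S n) \<sigma>) = wt \<kappa> n (A n \<sigma> - B n \<sigma>) (A n \<sigma> + B n \<sigma>)"
            unfolding negH[OF n] unfolding wt_def \<kappa>_def b using n by (simp add: field_simps power2_eq_square)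
        qed
      have m: "\<And>n x y. n \<ge> 1 \<Longrightarrow> (\<Sum>\<sigma>\<in>spin_configs (2*n). exp (x * (A n \<sigma> - B n \<sigma>) + y * (A n \<sigma> + B n \<sigma>))) = 4^n * (cosh (x + y) * cosh (x - y)) ^ n"
      proof -
        fix n :: nat and x y :: real
        have "x * (A n \<sigma> - B n \<sigma>) + y * (A n \<sigma> + B n \<sigma>) = (x + y) * A n \<sigma> + (y - x) * B n \<sigma>" for \<sigma>
          by (simp add: algebra_simps)
        then have "(\<Sum>\<sigma>\<in>spin_configs (2*n). exp (x * (A n \<sigma> - B n \<sigma>) + y * (A n \<sigma> + B n \<sigma>)))
            = (\<Sum>\<sigma>\<in>spin_configs (2*n). exp ((x + y) * A n \<sigma> + (y - x) * B n \<sigma>))" by simp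
        also have "\<dots> = 4^n * (cosh (x + y) * cosh (y - x))^n" by (rule mgfgen)
        also have "cosh (y - x) = cosh (x - y)" by (metis cosh_minus minus_diff_eq)
        finally show "(\<Sum>\<sigma>\<in>spin_configs (2*n). exp (x * (A n \<sigma> - B n \<sigma>) + y * (A n \<sigma> + B n \<sigma>))) = 4^n * (cosh (x + y) * cosh (x - y)) ^ n" .
      qed
      have tq: "\<And>n \<sigma>. n \<ge> 1 \<Longrightarrow> \<sigma> \<in> spin_configs (2*n) \<Longrightarrow> sqrt (real (2*n)) / 2 * (mag1 (2*n) (S n) \<sigma> + mag2 (2*n) (S n) \<sigma>) = (A n \<sigma> + B n \<sigma>) / qq n ^ 2"
      proof -
        fix n :: nat and \<sigma> :: "nat \<Rightarrow> real" assume n: "n \<ge> 1"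
        show "sqrt (real (2*n)) / 2 * (mag1 (2*n) (S n) \<sigma> + mag2 (2*n) (S n) \<sigma>) = (A n \<sigma> + B n \<sigma>) / qq n ^ 2"
          unfolding m1 m2 distrib_left[symmetric] by (rule TQf[OF n])
      qed
      have tp: "\<And>n \<sigma>. n \<ge> 1 \<Longrightarrow> \<sigma> \<in> spin_configs (2*n) \<Longrightarrow> real (2*n) powr (1/4) / 2 * (mag1 (2*n) (S n) \<sigma> - mag2 (2*n) (S n) \<sigma>) = (A n \<sigma> - B n \<sigma>) / qq n ^ 3"
      proof -
        fix n :: nat and \<sigma> :: "nat \<Rightarrow> real" assume n: "n \<ge> 1"
        show "real (2*n) powr (1/4) / 2 * (mag1 (2*n) (S n) \<sigma> - mag2 (2*n) (S n) \<sigma>) = (A n \<sigma> - B n \<sigma>) / qq n ^ 3"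
          unfolding m1 m2 right_diff_distrib[symmetric] by (rule TPf[OF n])
      qed
    note r = model_limits[OF k0(1) k0(2) w m tq tp]
    show ?thesis using r unfolding var by blast
  qed
  show ?thesis using pos neg by blast
qed


end
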